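(* Let $W\in\mathbb{R}^{n\times n}$ be positive definite (i.e. $x^TWx>0$ for all nonzero $x\in\mathbb{R}^n$; $W$ need not be symmetric), let $B\in\mathbb{R}^{m\times n}$ with $\operatorname{rank}(B)<m\le n$, and let $$A=\begin{pmatrix} W & B^T\\ -B & 0\end{pmatrix},$$ and let $b\in\mathbb{R}^{n+m}$ lie in the range of $A$. Let $P\in\mathbb{R}^{n\times n}$ be positive definite (not necessarily symmetric) and $$M=\begin{pmatrix} P & B^T\\ -B & 0\end{pmatrix}.$$ Consider the iteration $x^{(k+1)}=x^{(k)}+M^\dagger(b-Ax^{(k)})$, $k=0,1,2,\dots$, where $M^\dagger$ is the Moore–Penrose inverse of $M$. Let $E=BP^{-1}B^T$ and $X=P^{-1}-P^{-1}B^TE^\dagger BP^{-1}$. Then this iteration is convergent if and only if $\gamma(X(P-W))<1$.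
   Context: For a square matrix $T$ with spectrum $\sigma(T)$, $\gamma(T)=\max\{|\lambda|:\lambda\in\sigma(T)\setminus\{1\}\}$ (the pseudo-spectral radius). $E^\dagger$ denotes the Moore–Penrose inverse of $E$. The iteration is called convergent if the sequence $x^{(k)}$ converges (to a solution of $Ax=b$) for every initial guess $x^{(0)}$; equivalently, with iteration matrix $T=I-M^\dagger A$, the limit $\lim_{k\to\infty}T^k$ exists. *)

theory Defs
  imports "Jordan_Normal_Form.Jordan_Normal_Form" "Jordan_Normal_Form.DL_Rank"
begin

definition pos_def_mat :: "nat \<Rightarrow> real mat \<Rightarrow> bool" where
  "pos_def_mat n W \<longleftrightarrow> W \<in> carrier_mat n n \<and>
     (\<forall>x \<in> carrier_vec n. x \<noteq> 0\<^sub>v n \<longrightarrow> x \<bullet> (W *\<^sub>v x) > 0)"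

definition mat_inv :: "nat \<Rightarrow> real mat \<Rightarrow> real mat" where
  "mat_inv n P = (THE Q. Q \<in> carrier_mat n n \<and> P * Q = 1\<^sub>m n \<and> Q * P = 1\<^sub>m n)"

definition moore_penrose :: "real mat \<Rightarrow> real mat" where
  "moore_penrose E = (THE X. X \<in> carrier_mat (dim_col E) (dim_row E) \<and>
      E * X * E = E \<and> X * E * X = X \<and>
      transpose_mat (E * X) = E * X \<and> transpose_mat (X * E) = X * E)"

definition mat_rank :: "real mat \<Rightarrow> nat" where
  "mat_rank B = vec_space.rank (dim_row B) B"

definition pseudo_spectral_radius :: "real mat \<Rightarrow> real" where
  "pseudo_spectral_radius T =
     Max ({cmod l | l. eigenvalue (map_mat complex_of_real T) l \<and> l \<noteq> 1} \<union> {0})"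

fun iter_seq :: "real mat \<Rightarrow> real mat \<Rightarrow> real vec \<Rightarrow> real vec \<Rightarrow> nat \<Rightarrow> real vec" where
  "iter_seq Mp A b x0 0 = x0"
| "iter_seq Mp A b x0 (Suc k) =
     iter_seq Mp A b x0 k + Mp *\<^sub>v (b - A *\<^sub>v iter_seq Mp A b x0 k)"

definition vec_tendsto :: "nat \<Rightarrow> (nat \<Rightarrow> real vec) \<Rightarrow> real vec \<Rightarrow> bool" where
  "vec_tendsto N x y \<longleftrightarrow> (\<forall>i < N. (\<lambda>k. x k $ i) \<longlonglongrightarrow> y $ i)"

definition iteration_convergent :: "nat \<Rightarrow> real mat \<Rightarrow> real mat \<Rightarrow> real vec \<Rightarrow> bool" where
  "iteration_convergent N M A b \<longleftrightarrow>
     (\<forall>x0 \<in> carrier_vec N. \<exists>y \<in> carrier_vec N. A *\<^sub>v y = b \<and>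
        vec_tendsto N (iter_seq (moore_penrose M) A b x0) y)"

end

theory Submission
  imports Defs "Jordan_Normal_Form.Spectral_Radius"
begin

lemma mA: "dim_col A = dim_row B \<Longrightarrow> dim_col B = dim_row C \<Longrightarrow> (A::'a::comm_ring_1 mat) * B * C = A * (B * C)"
  by (rule assoc_mult_mat[of A "dim_row A" "dim_col A" B "dim_col B" C "dim_col C"]) auto

lemma tM: "dim_col A = dim_row B \<Longrightarrow> transpose_mat ((A::'a::comm_ring_1 mat) * B) = transpose_mat B * transpose_mat A"
  by (rule transpose_mult[of A "dim_row A" "dim_col A" B "dim_col B"]) auto

lemma dL: "dim_col A = dim_row B \<Longrightarrow> dim_row B = dim_row C \<Longrightarrow> dim_col B = dim_col C \<Longrightarrow>
  (A::'a::comm_ring_1 mat) * (B + C) = A * B + A * C"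
  by (rule mult_add_distrib_mat[of A "dim_row A" "dim_col A" B "dim_col B"]) auto

lemma dR: "dim_row A = dim_row B \<Longrightarrow> dim_col A = dim_col B \<Longrightarrow> dim_col B = dim_row C \<Longrightarrow>
  ((A::'a::comm_ring_1 mat) + B) * C = A * C + B * C"
  by (rule add_mult_distrib_mat[of A "dim_row A" "dim_col A" B C "dim_col C"]) auto

lemma dLm: "dim_col A = dim_row B \<Longrightarrow> dim_row B = dim_row C \<Longrightarrow> dim_col B = dim_col C \<Longrightarrow>
  (A::'a::comm_ring_1 mat) * (B - C) = A * B - A * C"
  by (rule mult_minus_distrib_mat[of A "dim_row A" "dim_col A" B "dim_col B"]) auto

lemma dRm: "dim_row A = dim_row B \<Longrightarrow> dim_col A = dim_col B \<Longrightarrow> dim_col B = dim_row C \<Longrightarrow>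
  ((A::'a::comm_ring_1 mat) - B) * C = A * C - B * C"
  by (rule minus_mult_distrib_mat[of A "dim_row A" "dim_col A" B C "dim_col C"]) auto

lemma tAdd: "dim_row A = dim_row B \<Longrightarrow> dim_col A = dim_col B \<Longrightarrow> transpose_mat ((A::'a::comm_ring_1 mat) + B) = transpose_mat A + transpose_mat B"
  by (rule transpose_add[of A "dim_row A" "dim_col A"]) auto

lemma tMin: "dim_row A = dim_row B \<Longrightarrow> dim_col A = dim_col B \<Longrightarrow> transpose_mat ((A::'a::comm_ring_1 mat) - B) = transpose_mat A - transpose_mat B"
  by (rule transpose_minus[of A "dim_row A" "dim_col A"]) auto

lemma mAv: "dim_col A = dim_row B \<Longrightarrow> dim_col B = dim_vec v \<Longrightarrow> ((A::'a::comm_ring_1 mat) * B) *\<^sub>v v = A *\<^sub>v (B *\<^sub>v v)"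
  by (rule assoc_mult_mat_vec[of A "dim_row A" "dim_col A" B "dim_col B"]) auto

lemma real_sp_self_0: "(v::real vec) \<bullet> v = 0 \<Longrightarrow> v = 0\<^sub>v (dim_vec v)"
proof -
  assume h: "v \<bullet> v = 0"
  have "(\<Sum>i\<in>{0..<dim_vec v}. v $ i * v $ i) = 0" using h by (simp add: scalar_prod_def)
  hence "\<forall>i\<in>{0..<dim_vec v}. v $ i * v $ i = 0"
    by (subst sum_nonneg_eq_0_iff[symmetric]) auto
  thus ?thesis by (intro eq_vecI) auto
qed

lemma inv_exists:
  assumes K: "(K::real mat) \<in> carrier_mat k k"
    and inj: "\<And>x. x \<in> carrier_vec k \<Longrightarrow> K *\<^sub>v x = 0\<^sub>v k \<Longrightarrow> x = 0\<^sub>v k"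
  shows "\<exists>G \<in> carrier_mat k k. K * G = 1\<^sub>m k \<and> G * K = 1\<^sub>m k"
proof -
  have "det K \<noteq> 0" using det_0_iff_vec_prod_zero_field[OF K] inj by blast
  from det_non_zero_imp_unit[OF K this, of "()"]
  show ?thesis unfolding Units_def ring_mat_def by auto
qed

lemma inv_sym:
  assumes K: "(K::real mat) \<in> carrier_mat k k" and sym: "transpose_mat K = K"
    and G: "G \<in> carrier_mat k k" and KG: "K * G = 1\<^sub>m k" and GK: "G * K = 1\<^sub>m k"
  shows "transpose_mat G = G"
proof -
  have "transpose_mat G * K = 1\<^sub>m k"
    using arg_cong[OF KG, of transpose_mat] K G sym by (simp add: tM)
  have "transpose_mat G = transpose_mat G * (K * G)" using KG G by simp
  also have "\<dots> = transpose_mat G * K * G" using K G by (simp add: mA)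
  finally show ?thesis using \<open>transpose_mat G * K = 1\<^sub>m k\<close> G by simp
qed

lemma frf:
  assumes "(A::real mat) \<in> carrier_mat r c"
  shows "\<exists>k U C. U \<in> carrier_mat r k \<and> C \<in> carrier_mat k c \<and> A = U * C \<and>
    (\<forall>z \<in> carrier_vec k. U *\<^sub>v z = 0\<^sub>v r \<longrightarrow> z = 0\<^sub>v k) \<and>
    (\<forall>y \<in> carrier_vec k. transpose_mat C *\<^sub>v y = 0\<^sub>v c \<longrightarrow> y = 0\<^sub>v k)"
  using assms
proof (induction c arbitrary: A)
  case 0
  show ?case
    by (rule exI[of _ 0], rule exI[of _ "0\<^sub>m r 0"], rule exI[of _ "0\<^sub>m 0 0"], insert 0,
      auto intro!: eq_matI eq_vecI)
next
  case (Suc c)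
  define A0 where "A0 = mat r c (\<lambda>(i,j). A $$ (i,j))"
  define a where "a = col A c"
  have A0: "A0 \<in> carrier_mat r c" unfolding A0_def by auto
  from Suc.IH[OF A0] obtain k U C where U: "U \<in> carrier_mat r k" and C: "C \<in> carrier_mat k c"
    and UC0: "A0 = U * C" and Ui: "\<forall>z \<in> carrier_vec k. U *\<^sub>v z = 0\<^sub>v r \<longrightarrow> z = 0\<^sub>v k"
    and Ci: "\<forall>y \<in> carrier_vec k. transpose_mat C *\<^sub>v y = 0\<^sub>v c \<longrightarrow> y = 0\<^sub>v k" by blast
  have UC: "row U i \<bullet> col C j = A $$ (i,j)" if "i < r" "j < c" for i j
  proof -
    have "A0 $$ (i,j) = (U * C) $$ (i,j)" using UC0 by simp
    thus ?thesis using that U C unfolding A0_def by simp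
  qed
  have a: "a \<in> carrier_vec r" "\<And>i. i < r \<Longrightarrow> a $ i = A $$ (i,c)" unfolding a_def using Suc.prems by auto
  show ?case
  proof (cases "\<exists>z \<in> carrier_vec k. U *\<^sub>v z = a")
    case True
    then obtain z where z: "z \<in> carrier_vec k" and Uz: "U *\<^sub>v z = a" by blast
    define C' where "C' = mat k (Suc c) (\<lambda>(i,j). if j < c then C $$ (i,j) else z $ i)"
    have C': "C' \<in> carrier_mat k (Suc c)" unfolding C'_def by auto
    have colC': "col C' j = (if j < c then col C j else z)" if "j < Suc c" for j
      using that C z unfolding C'_def by (intro eq_vecI) auto
    have "A = U * C'"
    proof (rule eq_matI)
      fix i j assume ij: "i < dim_row (U * C')" "j < dim_col (U * C')"
      hence i: "i < r" and j: "j < Suc c" using U C' by auto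
      show "A $$ (i, j) = (U * C') $$ (i, j)"
      proof (cases "j < c")
        case True thus ?thesis using i j UC[OF i True] colC'[OF j] U C' by simp
      next
        case False hence "j = c" using j by auto
        moreover have "row U i \<bullet> z = a $ i" using Uz[symmetric] i U by simp
        ultimately show ?thesis using i j colC'[OF j] U a C' by simp
      qed
    qed (insert Suc.prems U C', auto)
    moreover have "\<forall>y \<in> carrier_vec k. transpose_mat C' *\<^sub>v y = 0\<^sub>v (Suc c) \<longrightarrow> y = 0\<^sub>v k"
    proof (intro ballI impI)
      fix y assume y: "y \<in> carrier_vec k" and h: "transpose_mat C' *\<^sub>v y = 0\<^sub>v (Suc c)"
      have "transpose_mat C *\<^sub>v y = 0\<^sub>v c"
      proof (rule eq_vecI)
        fix j assume "j < dim_vec (0\<^sub>v c)"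
        hence j: "j < c" by simp
        have "(transpose_mat C' *\<^sub>v y) $ j = 0" using h j by simp
        thus "(transpose_mat C *\<^sub>v y) $ j = 0\<^sub>v c $ j"
          using j colC'[of j] C C' by simp
      qed (insert C, auto)
      thus "y = 0\<^sub>v k" using Ci y by blast
    qed
    ultimately show ?thesis using U C' Ui by blast
  next
    case False
    define U' where "U' = mat r (Suc k) (\<lambda>(i,j). if j < k then U $$ (i,j) else a $ i)"
    define C' where "C' = mat (Suc k) (Suc c) (\<lambda>(i,j). if i < k then (if j < c then C $$ (i,j) else 0)
       else (if j = c then 1 else 0))"
    have U': "U' \<in> carrier_mat r (Suc k)" unfolding U'_def by auto
    have C': "C' \<in> carrier_mat (Suc k) (Suc c)" unfolding C'_def by auto
    have "A = U' * C'"
    proof (rule eq_matI)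
      fix i j assume ij: "i < dim_row (U' * C')" "j < dim_col (U' * C')"
      hence i: "i < r" and j: "j < Suc c" using U' C' by auto
      have "(U' * C') $$ (i,j) = (\<Sum>t<Suc k. U' $$ (i,t) * C' $$ (t,j))"
        using i j U' C' by (simp add: scalar_prod_def atLeast0LessThan)
      also have "\<dots> = (\<Sum>t<k. U $$ (i,t) * C' $$ (t,j)) + a $ i * C' $$ (k,j)"
        using i unfolding U'_def by simp
      also have "\<dots> = A $$ (i,j)"
      proof (cases "j < c")
        case True
        have "(\<Sum>t<k. U $$ (i,t) * C' $$ (t,j)) = (\<Sum>t<k. U $$ (i,t) * C $$ (t,j))"
          using True j unfolding C'_def by (intro sum.cong) auto
        also have "\<dots> = row U i \<bullet> col C j" using i True U C
          by (simp add: scalar_prod_def atLeast0LessThan)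
        finally show ?thesis using UC[OF i True] True j unfolding C'_def by simp
      next
        case False hence "j = c" using j by auto
        thus ?thesis using i a j unfolding C'_def by simp
      qed
      finally show "A $$ (i, j) = (U' * C') $$ (i, j)" by simp
    qed (insert Suc.prems U' C', auto)
    moreover have "\<forall>w \<in> carrier_vec (Suc k). U' *\<^sub>v w = 0\<^sub>v r \<longrightarrow> w = 0\<^sub>v (Suc k)"
    proof (intro ballI impI)
      fix w assume w: "w \<in> carrier_vec (Suc k)" and h: "U' *\<^sub>v w = 0\<^sub>v r"
      define z where "z = vec k (\<lambda>t. w $ t)"
      have z: "z \<in> carrier_vec k" unfolding z_def by simp
      have ent: "(U *\<^sub>v z) $ i + a $ i * w $ k = 0" if i: "i < r" for i
      proof -
        have "0 = (U' *\<^sub>v w) $ i" using h i by simp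
        also have "\<dots> = (\<Sum>t<Suc k. U' $$ (i,t) * w $ t)"
          using i U' w by (simp add: scalar_prod_def atLeast0LessThan)
        also have "\<dots> = (\<Sum>t<k. U $$ (i,t) * w $ t) + a $ i * w $ k"
          using i unfolding U'_def by simp
        also have "(\<Sum>t<k. U $$ (i,t) * w $ t) = (U *\<^sub>v z) $ i"
          using i U unfolding z_def by (simp add: scalar_prod_def atLeast0LessThan)
        finally show ?thesis by simp
      qed
      have wk: "w $ k = 0"
      proof (rule ccontr)
        assume nz: "w $ k \<noteq> 0"
        have "U *\<^sub>v ((- 1 / w $ k) \<cdot>\<^sub>v z) = a"
        proof (rule eq_vecI)
          fix i assume "i < dim_vec a"
          hence i: "i < r" using a by simp
          have "(U *\<^sub>v ((- 1 / w $ k) \<cdot>\<^sub>v z)) $ i = (- 1 / w $ k) * (U *\<^sub>v z) $ i"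
            using U z i by (simp add: mult_mat_vec)
          also have "\<dots> = a $ i" using ent[OF i] nz by (simp add: field_simps)
          finally show "(U *\<^sub>v ((- 1 / w $ k) \<cdot>\<^sub>v z)) $ i = a $ i" .
        qed (insert U a, auto)
        thus False using False z by auto
      qed
      have "U *\<^sub>v z = 0\<^sub>v r" using ent wk U by (intro eq_vecI) auto
      hence "z = 0\<^sub>v k" using Ui z by blast
      hence "w $ i = 0" if "i < k" for i using that
        by (metis z_def index_vec index_zero_vec(1))
      thus "w = 0\<^sub>v (Suc k)" using wk w
        by (intro eq_vecI) (auto simp: less_Suc_eq)
    qed
    moreover have "\<forall>y \<in> carrier_vec (Suc k). transpose_mat C' *\<^sub>v y = 0\<^sub>v (Suc c) \<longrightarrow> y = 0\<^sub>v (Suc k)"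
    proof (intro ballI impI)
      fix y assume y: "y \<in> carrier_vec (Suc k)" and h: "transpose_mat C' *\<^sub>v y = 0\<^sub>v (Suc c)"
      define z where "z = vec k (\<lambda>t. y $ t)"
      have z: "z \<in> carrier_vec k" unfolding z_def by simp
      have ent: "(transpose_mat C' *\<^sub>v y) $ j = (\<Sum>t<k. C' $$ (t,j) * y $ t) + C' $$ (k,j) * y $ k"
        if "j < Suc c" for j
        using that C' y by (simp add: scalar_prod_def atLeast0LessThan)
      have yk: "y $ k = 0" using ent[of c] h unfolding C'_def by simp
      have "transpose_mat C *\<^sub>v z = 0\<^sub>v c"
      proof (rule eq_vecI)
        fix j assume "j < dim_vec (0\<^sub>v c)" hence j: "j < c" by simp
        have "(transpose_mat C *\<^sub>v z) $ j = (\<Sum>t<k. C $$ (t,j) * y $ t)"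
          using j C unfolding z_def by (simp add: scalar_prod_def atLeast0LessThan)
        also have "\<dots> = (\<Sum>t<k. C' $$ (t,j) * y $ t)"
          using j unfolding C'_def by (intro sum.cong) auto
        also have "\<dots> = 0" using ent[of j] h j yk by simp
        finally show "(transpose_mat C *\<^sub>v z) $ j = 0\<^sub>v c $ j" using j by simp
      qed (insert C, auto)
      hence "z = 0\<^sub>v k" using Ci z by blast
      hence "y $ i = 0" if "i < k" for i using that
        by (metis z_def index_vec index_zero_vec(1))
      thus "y = 0\<^sub>v (Suc k)" using yk y
        by (intro eq_vecI) (auto simp: less_Suc_eq)
    qed
    ultimately show ?thesis using U' C' by blast
  qed
qed

lemma sp_CCt: assumes C: "(C::real mat) \<in> carrier_mat k c" and x: "x \<in> carrier_vec k"
  shows "x \<bullet> (C *\<^sub>v (transpose_mat C *\<^sub>v x)) = (transpose_mat C *\<^sub>v x) \<bullet> (transpose_mat C *\<^sub>v x)"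
proof -
  have "x \<bullet> (C *\<^sub>v (transpose_mat C *\<^sub>v x)) = (C *\<^sub>v (transpose_mat C *\<^sub>v x)) \<bullet> x"
    by (rule comm_scalar_prod[of _ k]) (insert C x, auto)
  also have "\<dots> = (transpose_mat C *\<^sub>v x) \<bullet> (transpose_mat C *\<^sub>v x)"
    using transpose_vec_mult_scalar[of "transpose_mat C" c k x "transpose_mat C *\<^sub>v x"] C x by simp
  finally show ?thesis .
qed

lemma mp_exists:
  assumes A: "(A::real mat) \<in> carrier_mat r c"
  shows "\<exists>X \<in> carrier_mat c r. A * X * A = A \<and> X * A * X = X \<and>
     transpose_mat (A * X) = A * X \<and> transpose_mat (X * A) = X * A"
proof -
  from frf[OF A] obtain k U C where U: "U \<in> carrier_mat r k" and C: "C \<in> carrier_mat k c"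
    and AUC: "A = U * C" and Ui: "\<forall>z \<in> carrier_vec k. U *\<^sub>v z = 0\<^sub>v r \<longrightarrow> z = 0\<^sub>v k"
    and Ci: "\<forall>y \<in> carrier_vec k. transpose_mat C *\<^sub>v y = 0\<^sub>v c \<longrightarrow> y = 0\<^sub>v k" by blast
  define K1 where "K1 = C * transpose_mat C"
  define K2 where "K2 = transpose_mat U * U"
  have K1: "K1 \<in> carrier_mat k k" and K2: "K2 \<in> carrier_mat k k" unfolding K1_def K2_def using U C by auto
  have "\<exists>G \<in> carrier_mat k k. K1 * G = 1\<^sub>m k \<and> G * K1 = 1\<^sub>m k"
  proof (rule inv_exists[OF K1])
    fix x assume x: "x \<in> carrier_vec k" and h: "K1 *\<^sub>v x = 0\<^sub>v k"
    have "K1 *\<^sub>v x = C *\<^sub>v (transpose_mat C *\<^sub>v x)" unfolding K1_def using C x by simp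
    hence "(transpose_mat C *\<^sub>v x) \<bullet> (transpose_mat C *\<^sub>v x) = x \<bullet> (K1 *\<^sub>v x)" using sp_CCt[OF C x] by simp
    also have "\<dots> = 0" using h x by simp
    finally have "(transpose_mat C *\<^sub>v x) \<bullet> (transpose_mat C *\<^sub>v x) = 0" .
    from real_sp_self_0[OF this] have "transpose_mat C *\<^sub>v x = 0\<^sub>v c" using C by simp
    thus "x = 0\<^sub>v k" using Ci x by blast
  qed
  then obtain G1 where G1: "G1 \<in> carrier_mat k k" and K1G1: "K1 * G1 = 1\<^sub>m k" and G1K1: "G1 * K1 = 1\<^sub>m k" by blast
  have "\<exists>G \<in> carrier_mat k k. K2 * G = 1\<^sub>m k \<and> G * K2 = 1\<^sub>m k"
  proof (rule inv_exists[OF K2])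
    fix x assume x: "x \<in> carrier_vec k" and h: "K2 *\<^sub>v x = 0\<^sub>v k"
    have "K2 *\<^sub>v x = transpose_mat U *\<^sub>v (transpose_mat (transpose_mat U) *\<^sub>v x)" unfolding K2_def using U x by simp
    hence "(U *\<^sub>v x) \<bullet> (U *\<^sub>v x) = x \<bullet> (K2 *\<^sub>v x)" using sp_CCt[of "transpose_mat U" k r x] U x by simp
    also have "\<dots> = 0" using h x by simp
    finally have "(U *\<^sub>v x) \<bullet> (U *\<^sub>v x) = 0" .
    from real_sp_self_0[OF this] have "U *\<^sub>v x = 0\<^sub>v r" using U by simp
    thus "x = 0\<^sub>v k" using Ui x by blast
  qed
  then obtain G2 where G2: "G2 \<in> carrier_mat k k" and K2G2: "K2 * G2 = 1\<^sub>m k" and G2K2: "G2 * K2 = 1\<^sub>m k" by blast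
  have s1: "transpose_mat G1 = G1"
    by (rule inv_sym[OF K1 _ G1 K1G1 G1K1]) (insert C, simp add: K1_def tM)
  have s2: "transpose_mat G2 = G2"
    by (rule inv_sym[OF K2 _ G2 K2G2 G2K2]) (insert U, simp add: K2_def tM)
  have T1: "C * (transpose_mat C * (G1 * Z)) = Z" if "dim_row Z = k" for Z
  proof -
    have "C * (transpose_mat C * (G1 * Z)) = K1 * G1 * Z" unfolding K1_def using C G1 that by (simp add: mA)
    thus ?thesis using K1G1 that by simp
  qed
  have T2: "G2 * (transpose_mat U * (U * Z)) = Z" if "dim_row Z = k" for Z
  proof -
    have "G2 * (transpose_mat U * (U * Z)) = G2 * K2 * Z" unfolding K2_def using U G2 that by (simp add: mA)
    thus ?thesis using G2K2 that by simp
  qed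
  define X where "X = transpose_mat C * (G1 * (G2 * transpose_mat U))"
  have X: "X \<in> carrier_mat c r" unfolding X_def using U C G1 G2 by auto
  have AX: "A * X = U * (G2 * transpose_mat U)" unfolding AUC X_def using U C G1 G2 by (simp add: mA T1)
  have XA: "X * A = transpose_mat C * (G1 * C)" unfolding AUC X_def using U C G1 G2 by (simp add: mA T2)
  show ?thesis
  proof (intro bexI[OF _ X] conjI)
    show "A * X * A = A" unfolding AX using U C G2 by (simp add: AUC mA T2)
    show "X * A * X = X" unfolding XA using U C G1 G2 by (simp add: X_def mA T1)
    show "transpose_mat (A * X) = A * X" unfolding AX using U G2 s2 by (simp add: tM mA)
    show "transpose_mat (X * A) = X * A" unfolding XA using C G1 s1 by (simp add: tM mA)
  qed
qed

lemma mp_unique: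
  assumes A: "(A::real mat) \<in> carrier_mat r c" and X: "X \<in> carrier_mat c r" and Y: "Y \<in> carrier_mat c r"
    and X1: "A * X * A = A" and X2: "X * A * X = X" and X3: "transpose_mat (A * X) = A * X"
    and X4: "transpose_mat (X * A) = X * A"
    and Y1: "A * Y * A = A" and Y2: "Y * A * Y = Y" and Y3: "transpose_mat (A * Y) = A * Y"
    and Y4: "transpose_mat (Y * A) = Y * A"
  shows "X = Y"
proof -
  have X2n: "X * (A * X) = X" using X2 A X by (simp add: mA)
  have Y2n: "Y * (A * Y) = Y" using Y2 A Y by (simp add: mA)
  have a1: "transpose_mat A = transpose_mat A * (A * Y)"
  proof -
    have "transpose_mat A = transpose_mat (A * Y * A)" using Y1 by simp
    also have "\<dots> = transpose_mat A * transpose_mat (A * Y)" using A Y by (simp add: tM mA)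
    finally show ?thesis using Y3 by simp
  qed
  have ax: "A * X = A * X * (A * Y)"
  proof -
    have "A * X = transpose_mat (A * X)" using X3 by simp
    also have "\<dots> = transpose_mat X * transpose_mat A" using A X by (simp add: tM)
    also have "\<dots> = transpose_mat X * (transpose_mat A * (A * Y))" by (simp only: a1[symmetric])
    also have "\<dots> = transpose_mat (A * X) * (A * Y)" using A X Y by (simp add: tM mA)
    finally show ?thesis using X3 by simp
  qed
  have x: "X = X * (A * Y)"
  proof -
    have "X = X * (A * X)" using X2n by simp
    also have "\<dots> = X * (A * X * (A * Y))" by (simp only: ax[symmetric])
    also have "\<dots> = X * (A * X) * (A * Y)" using A X Y by (simp add: mA)
    finally show ?thesis using X2n by simp
  qed
  have a2: "transpose_mat A = X * (A * transpose_mat A)"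
  proof -
    have "transpose_mat A = transpose_mat (A * (X * A))" using X1 A X by (simp add: mA)
    also have "\<dots> = transpose_mat (X * A) * transpose_mat A" using A X by (simp add: tM)
    also have "\<dots> = X * A * transpose_mat A" using X4 by simp
    finally show ?thesis using A X by (simp add: mA)
  qed
  have ya: "Y * A = X * (A * (Y * A))"
  proof -
    have "Y * A = transpose_mat (Y * A)" using Y4 by simp
    also have "\<dots> = transpose_mat A * transpose_mat Y" using A Y by (simp add: tM)
    also have "\<dots> = X * (A * transpose_mat A) * transpose_mat Y" by (simp only: a2[symmetric])
    also have "\<dots> = X * (A * (transpose_mat A * transpose_mat Y))" using A X Y by (simp add: mA)
    also have "transpose_mat A * transpose_mat Y = transpose_mat (Y * A)" using A Y by (simp add: tM)
    finally show ?thesis using Y4 by simp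
  qed
  have y: "Y = X * (A * Y)"
  proof -
    have "Y = Y * A * Y" using Y2n A Y by (simp add: mA)
    also have "\<dots> = X * (A * (Y * A)) * Y" by (simp only: ya[symmetric])
    also have "\<dots> = X * (A * (Y * (A * Y)))" using A X Y by (simp add: mA)
    finally show ?thesis using Y2n by simp
  qed
  show ?thesis using x y by simp
qed

lemma moore_penrose:
  assumes A: "(A::real mat) \<in> carrier_mat r c"
  shows "moore_penrose A \<in> carrier_mat c r" "A * moore_penrose A * A = A"
    "moore_penrose A * A * moore_penrose A = moore_penrose A"
    "transpose_mat (A * moore_penrose A) = A * moore_penrose A"
    "transpose_mat (moore_penrose A * A) = moore_penrose A * A"
proof -
  from mp_exists[OF A] obtain X where X: "X \<in> carrier_mat c r" and h: "A * X * A = A \<and> X * A * X = X \<and>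
     transpose_mat (A * X) = A * X \<and> transpose_mat (X * A) = X * A" by blast
  have "moore_penrose A = X" unfolding moore_penrose_def
  proof (rule the_equality)
    show "X \<in> carrier_mat (dim_col A) (dim_row A) \<and> A * X * A = A \<and> X * A * X = X \<and>
      transpose_mat (A * X) = A * X \<and> transpose_mat (X * A) = X * A" using X h A by auto
    fix Y assume "Y \<in> carrier_mat (dim_col A) (dim_row A) \<and> A * Y * A = A \<and> Y * A * Y = Y \<and>
      transpose_mat (A * Y) = A * Y \<and> transpose_mat (Y * A) = Y * A"
    thus "Y = X" using mp_unique[OF A _ X] h A by auto
  qed
  thus "moore_penrose A \<in> carrier_mat c r" "A * moore_penrose A * A = A"
    "moore_penrose A * A * moore_penrose A = moore_penrose A"
    "transpose_mat (A * moore_penrose A) = A * moore_penrose A"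
    "transpose_mat (moore_penrose A * A) = moore_penrose A * A" using X h by auto
qed


lemma ev_UV:
  fixes U V :: "'a::field mat"
  assumes U: "U \<in> carrier_mat N n" and V: "V \<in> carrier_mat n N" and l: "l \<noteq> 0"
    and ev: "eigenvalue (U * V) l"
  shows "eigenvalue (V * U) l"
proof -
  from ev obtain w where w: "w \<in> carrier_vec N" "w \<noteq> 0\<^sub>v N" and UVw: "(U * V) *\<^sub>v w = l \<cdot>\<^sub>v w"
    unfolding eigenvalue_def eigenvector_def using U by auto
  define u where "u = V *\<^sub>v w"
  have u: "u \<in> carrier_vec n" unfolding u_def using V w by auto
  have "(V * U) *\<^sub>v u = V *\<^sub>v ((U * V) *\<^sub>v w)" unfolding u_def using U V w by simp
  also have "\<dots> = l \<cdot>\<^sub>v u" unfolding UVw u_def using V w by (simp add: mult_mat_vec)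
  finally have VUu: "(V * U) *\<^sub>v u = l \<cdot>\<^sub>v u" .
  have "u \<noteq> 0\<^sub>v n"
  proof
    assume u0: "u = 0\<^sub>v n"
    have "l \<cdot>\<^sub>v w = U *\<^sub>v u" using UVw U V w unfolding u_def by simp
    also have "\<dots> = 0\<^sub>v N" using u0 U by (intro eq_vecI) auto
    finally have lw: "l \<cdot>\<^sub>v w = 0\<^sub>v N" .
    have "w = 0\<^sub>v N"
    proof (rule eq_vecI)
      fix i assume "i < dim_vec (0\<^sub>v N)"
      hence i: "i < N" by simp
      have "l * w $ i = 0" using arg_cong[OF lw, of "\<lambda>v. v $ i"] i w by simp
      thus "w $ i = 0\<^sub>v N $ i" using l i by simp
    qed (insert w, auto)
    thus False using w by simp
  qed
  thus ?thesis unfolding eigenvalue_def eigenvector_def using u VUu V U by auto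
qed

lemma pow_conv_one:
  fixes l :: complex
  assumes lim: "(\<lambda>k. l ^ k) \<longlonglongrightarrow> L" and ge: "norm l \<ge> 1"
  shows "l = 1"
proof -
  have "(\<lambda>k. l ^ Suc k) \<longlonglongrightarrow> L" using LIMSEQ_Suc[OF lim] by simp
  moreover have "(\<lambda>k. l ^ Suc k) \<longlonglongrightarrow> l * L" using tendsto_mult_left[OF lim, of l] by simp
  ultimately have eq: "L = l * L" using LIMSEQ_unique by blast
  have "(\<lambda>k. norm (l ^ k)) \<longlonglongrightarrow> norm L" using tendsto_norm[OF lim] .
  moreover have "\<forall>k. 1 \<le> norm (l ^ k)" using ge by (simp add: norm_power one_le_power)
  ultimately have "1 \<le> norm L" by (intro LIMSEQ_le_const) auto
  hence "L \<noteq> 0" by auto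
  thus ?thesis using eq by (metis mult_cancel_right1)
qed

lemma SP2:
  fixes S :: "real mat"
  assumes S: "S \<in> carrier_mat N N"
    and conv: "\<forall>w \<in> carrier_vec N. \<forall>i<N. convergent (\<lambda>k. (S ^\<^sub>m k *\<^sub>v w) $ i)"
    and ev: "eigenvalue (map_mat complex_of_real S) l" and l1: "l \<noteq> 1"
  shows "norm l < 1"
proof (rule ccontr)
  assume "\<not> norm l < 1" hence ge: "norm l \<ge> 1" by simp
  let ?Sc = "map_mat complex_of_real S"
  have Sc: "?Sc \<in> carrier_mat N N" using S by simp
  from ev obtain v where evv: "eigenvector ?Sc v l" unfolding eigenvalue_def by auto
  hence v: "v \<in> carrier_vec N" "v \<noteq> 0\<^sub>v N" using S unfolding eigenvector_def by auto
  then obtain i where i: "i < N" and vi: "v $ i \<noteq> 0" by (metis eq_vecI carrier_vecD index_zero_vec)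
  have ent: "(\<lambda>k. (S ^\<^sub>m k) $$ (i,j)) \<longlonglongrightarrow> lim (\<lambda>k. (S ^\<^sub>m k) $$ (i,j))" if j: "j < N" for j
  proof -
    have "convergent (\<lambda>k. (S ^\<^sub>m k *\<^sub>v unit_vec N j) $ i)" using conv i j by auto
    moreover have "(S ^\<^sub>m k *\<^sub>v unit_vec N j) $ i = (S ^\<^sub>m k) $$ (i,j)" for k
      using S i j by simp
    ultimately show ?thesis by (simp add: convergent_LIMSEQ_iff)
  qed
  have pw: "(?Sc ^\<^sub>m k *\<^sub>v v) $ i = (\<Sum>j<N. complex_of_real ((S ^\<^sub>m k) $$ (i,j)) * v $ j)" for k
  proof -
    have "?Sc ^\<^sub>m k = map_mat complex_of_real (S ^\<^sub>m k)" by (rule of_real_hom.mat_hom_pow[OF S, symmetric])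
    thus ?thesis using S i v by (simp add: scalar_prod_def atLeast0LessThan)
  qed
  have "(\<lambda>k. (?Sc ^\<^sub>m k *\<^sub>v v) $ i) \<longlonglongrightarrow> (\<Sum>j<N. complex_of_real (lim (\<lambda>k. (S ^\<^sub>m k) $$ (i,j))) * v $ j)"
    unfolding pw by (intro tendsto_sum tendsto_mult_right tendsto_of_real ent) auto
  moreover have "(?Sc ^\<^sub>m k *\<^sub>v v) $ i = l ^ k * v $ i" for k
    using eigenvector_pow[OF Sc evv, of k] i v by simp
  ultimately have "(\<lambda>k. l ^ k * v $ i) \<longlonglongrightarrow> (\<Sum>j<N. complex_of_real (lim (\<lambda>k. (S ^\<^sub>m k) $$ (i,j))) * v $ j)"
    by simp
  from tendsto_divide[OF this tendsto_const[of "v $ i"]] vi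
  have "(\<lambda>k. l ^ k) \<longlonglongrightarrow> (\<Sum>j<N. complex_of_real (lim (\<lambda>k. (S ^\<^sub>m k) $$ (i,j))) * v $ j) / v $ i"
    by simp
  from pow_conv_one[OF this ge] l1 show False by simp
qed

lemma smult_mat_vec: "(A::'a::comm_ring_1 mat) \<in> carrier_mat r c \<Longrightarrow> v \<in> carrier_vec c \<Longrightarrow>
  (a \<cdot>\<^sub>m A) *\<^sub>v v = a \<cdot>\<^sub>v (A *\<^sub>v v)"
  by (intro eq_vecI) (auto simp: scalar_prod_def sum_distrib_left mult.assoc)

lemma pow_smult: assumes A: "(A::'a::comm_ring_1 mat) \<in> carrier_mat n n"
  shows "(a \<cdot>\<^sub>m A) ^\<^sub>m k = (a ^ k) \<cdot>\<^sub>m (A ^\<^sub>m k)"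
proof (induction k)
  case 0 thus ?case using A by (intro eq_matI) auto
next
  case (Suc k)
  have "(a \<cdot>\<^sub>m A) ^\<^sub>m Suc k = ((a ^ k) \<cdot>\<^sub>m (A ^\<^sub>m k)) * (a \<cdot>\<^sub>m A)" using Suc by simp
  also have "\<dots> = (a ^ k) \<cdot>\<^sub>m ((A ^\<^sub>m k) * (a \<cdot>\<^sub>m A))"
    by (rule mult_smult_assoc_mat) (use A in auto)
  also have "\<dots> = (a ^ k) \<cdot>\<^sub>m (a \<cdot>\<^sub>m (A ^\<^sub>m k * A))"
    by (subst mult_smult_distrib[of _ n n]) (use A in auto)
  also have "\<dots> = (a ^ Suc k) \<cdot>\<^sub>m (A ^\<^sub>m Suc k)" using A by (intro eq_matI) auto
  finally show ?case .
qed

lemma SP1: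
  fixes S :: "real mat"
  assumes S: "S \<in> carrier_mat N N" and N: "N > 0"
    and all: "\<And>l. eigenvalue (map_mat complex_of_real S) l \<Longrightarrow> norm l < 1"
    and i: "i < N" and j: "j < N"
  shows "(\<lambda>k. (S ^\<^sub>m k) $$ (i,j)) \<longlonglongrightarrow> 0"
proof -
  let ?Sc = "map_mat complex_of_real S"
  have Sc: "?Sc \<in> carrier_mat N N" using S by simp
  define \<rho> where "\<rho> = spectral_radius ?Sc"
  from spectral_radius_mem_max(1)[OF Sc N] obtain l0 where "eigenvalue ?Sc l0" "\<rho> = norm l0"
    unfolding \<rho>_def spectrum_def by auto
  with all have rho1: "\<rho> < 1" and rho0: "0 \<le> \<rho>" by auto
  define r where "r = (1 + \<rho>) / 2"
  have r0: "0 < r" and r1: "r < 1" and rr: "\<rho> < r" using rho1 rho0 unfolding r_def by auto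
  define Sr where "Sr = complex_of_real (1 / r) \<cdot>\<^sub>m ?Sc"
  have Sr: "Sr \<in> carrier_mat N N" unfolding Sr_def using S by simp
  have "spectral_radius Sr < 1"
  proof -
    from spectral_radius_mem_max(1)[OF Sr N] obtain mu where ev: "eigenvalue Sr mu"
      and eq: "spectral_radius Sr = norm mu" unfolding spectrum_def by auto
    from ev obtain v where v: "v \<in> carrier_vec N" "v \<noteq> 0\<^sub>v N" and Srv: "Sr *\<^sub>v v = mu \<cdot>\<^sub>v v"
      unfolding eigenvalue_def eigenvector_def using Sr by auto
    have "?Sc *\<^sub>v v = complex_of_real r \<cdot>\<^sub>v (Sr *\<^sub>v v)"
      unfolding Sr_def using smult_mat_vec[OF Sc v(1)] r0 v
      by (intro eq_vecI) (auto simp: smult_mat_vec[OF Sc v(1)])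
    also have "\<dots> = (complex_of_real r * mu) \<cdot>\<^sub>v v" unfolding Srv by (intro eq_vecI) auto
    finally have "eigenvalue ?Sc (complex_of_real r * mu)"
      unfolding eigenvalue_def eigenvector_def using v S by auto
    hence "norm (complex_of_real r * mu) \<le> \<rho>" unfolding \<rho>_def
      by (intro spectral_radius_mem_max(2)[OF Sc N]) (auto simp: spectrum_def)
    hence "r * norm mu \<le> \<rho>" using r0 by (simp add: norm_mult)
    hence "r * norm mu < r * 1" using rr by simp
    hence "norm mu < 1" using r0 by (simp only: mult_less_cancel_left_pos)
    thus ?thesis using eq by simp
  qed
  from spectral_radius_jnf_norm_bound_less_1_upper_triangular[OF Sr this]
  obtain c where c: "\<And>k. norm_bound (Sr ^\<^sub>m k) c" by auto
  have bnd: "norm ((S ^\<^sub>m k) $$ (i,j)) \<le> c * r ^ k" for k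
  proof -
    have "Sr ^\<^sub>m k = complex_of_real (1 / r) ^ k \<cdot>\<^sub>m (?Sc ^\<^sub>m k)" unfolding Sr_def by (rule pow_smult[OF Sc])
    also have "?Sc ^\<^sub>m k = map_mat complex_of_real (S ^\<^sub>m k)" by (rule of_real_hom.mat_hom_pow[OF S, symmetric])
    finally have "(Sr ^\<^sub>m k) $$ (i,j) = complex_of_real (1 / r) ^ k * complex_of_real ((S ^\<^sub>m k) $$ (i,j))"
      using S i j by simp
    moreover have "norm ((Sr ^\<^sub>m k) $$ (i,j)) \<le> c" using c[of k] i j Sr unfolding norm_bound_def by auto
    moreover have cr: "cmod (1 / complex_of_real r) = 1 / r" using r0 by (simp add: norm_divide)
    ultimately have "(1 / r) ^ k * norm ((S ^\<^sub>m k) $$ (i,j)) \<le> c" using r0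
      by (simp add: norm_mult norm_power)
    hence "r ^ k * ((1 / r) ^ k * norm ((S ^\<^sub>m k) $$ (i,j))) \<le> r ^ k * c" using r0
      by (intro mult_left_mono) auto
    thus ?thesis using r0 by (simp add: power_one_over field_simps)
  qed
  have "(\<lambda>k. r ^ k) \<longlonglongrightarrow> 0" using r0 r1 by (intro LIMSEQ_power_zero) auto
  thus ?thesis by (rule tendsto_0_le[where K = c]) (use bnd r0 in \<open>auto simp: mult.commute\<close>)
qed




lemma colwise_zero:
  fixes K L Z :: "real mat"
  assumes K: "K \<in> carrier_mat a c" and L: "L \<in> carrier_mat b c" and Z: "Z \<in> carrier_mat c d"
    and KZ: "K * Z = 0\<^sub>m a d" and imp: "\<And>z. z \<in> carrier_vec c \<Longrightarrow> K *\<^sub>v z = 0\<^sub>v a \<Longrightarrow> L *\<^sub>v z = 0\<^sub>v b"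
  shows "L * Z = 0\<^sub>m b d"
proof (rule eq_matI)
  fix i j assume "i < dim_row (0\<^sub>m b d)" "j < dim_col (0\<^sub>m b d)"
  hence i: "i < b" and j: "j < d" by auto
  have "K *\<^sub>v col Z j = col (K * Z) j" by (rule col_mult2[OF K Z j, symmetric])
  also have "\<dots> = 0\<^sub>v a" using KZ j by simp
  finally have "L *\<^sub>v col Z j = 0\<^sub>v b" using imp Z j by simp
  hence "(L *\<^sub>v col Z j) $ i = 0" using i by simp
  thus "(L * Z) $$ (i, j) = 0\<^sub>m b d $$ (i, j)" using i j L Z by simp
qed (insert L Z, auto)

lemma pow_comm: assumes S: "(S::'a::comm_ring_1 mat) \<in> carrier_mat N N"
  shows "S ^\<^sub>m k * S = S * S ^\<^sub>m k"
proof (induction k)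
  case 0 thus ?case using S by simp
next
  case (Suc k)
  have "S ^\<^sub>m Suc k * S = (S ^\<^sub>m k * S) * S" by simp
  also have "\<dots> = (S * S ^\<^sub>m k) * S" using Suc by simp
  also have "\<dots> = S * (S ^\<^sub>m k * S)" using S by (simp add: mA)
  finally show ?case by simp
qed

locale sp =
  fixes n m :: nat and W P B :: "real mat"
  assumes W: "pos_def_mat n W" and P: "pos_def_mat n P" and B: "B \<in> carrier_mat m n"
begin

lemma Wc: "W \<in> carrier_mat n n" and Pc: "P \<in> carrier_mat n n"
  using W P unfolding pos_def_mat_def by auto

lemma W_pd: "x \<in> carrier_vec n \<Longrightarrow> x \<noteq> 0\<^sub>v n \<Longrightarrow> x \<bullet> (W *\<^sub>v x) > 0"
  using W unfolding pos_def_mat_def by auto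
lemma P_pd: "x \<in> carrier_vec n \<Longrightarrow> x \<noteq> 0\<^sub>v n \<Longrightarrow> x \<bullet> (P *\<^sub>v x) > 0"
  using P unfolding pos_def_mat_def by auto

definition "Pv = mat_inv n P"

lemma Pv: "Pv \<in> carrier_mat n n" "P * Pv = 1\<^sub>m n" "Pv * P = 1\<^sub>m n"
proof -
  have "\<exists>G \<in> carrier_mat n n. P * G = 1\<^sub>m n \<and> G * P = 1\<^sub>m n"
  proof (rule inv_exists[OF Pc])
    fix x assume x: "x \<in> carrier_vec n" and "P *\<^sub>v x = 0\<^sub>v n"
    hence "x \<bullet> (P *\<^sub>v x) = 0" by simp
    thus "x = 0\<^sub>v n" using P_pd[OF x] by fastforce
  qed
  then obtain G where G: "G \<in> carrier_mat n n" "P * G = 1\<^sub>m n" "G * P = 1\<^sub>m n" by blast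
  have "Pv = G" unfolding Pv_def mat_inv_def
  proof (rule the_equality)
    fix Q assume Q': "Q \<in> carrier_mat n n \<and> P * Q = 1\<^sub>m n \<and> Q * P = 1\<^sub>m n"
    hence Q: "Q \<in> carrier_mat n n" "P * Q = 1\<^sub>m n" "Q * P = 1\<^sub>m n" by auto
    have "Q = Q * (P * G)" using G Q by simp
    also have "\<dots> = (Q * P) * G" by (rule mA[symmetric]) (use G Q Pc in auto)
    finally show "Q = G" using Q G by simp
  qed (use G in auto)
  thus "Pv \<in> carrier_mat n n" "P * Pv = 1\<^sub>m n" "Pv * P = 1\<^sub>m n" using G by auto
qed

lemma Pv_pd: assumes y: "y \<in> carrier_vec n" and y0: "y \<noteq> 0\<^sub>v n" shows "y \<bullet> (Pv *\<^sub>v y) > 0"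
proof -
  define x where "x = Pv *\<^sub>v y"
  have x: "x \<in> carrier_vec n" unfolding x_def using Pv y by simp
  have Px: "P *\<^sub>v x = y" unfolding x_def using Pv Pc y by (simp add: mAv[symmetric])
  have "x \<noteq> 0\<^sub>v n" using Px y0 Pc by (auto intro: eq_vecI)
  hence "x \<bullet> (P *\<^sub>v x) > 0" using P_pd x by simp
  also have "x \<bullet> (P *\<^sub>v x) = y \<bullet> x" using Px comm_scalar_prod[OF x, of y] y by simp
  finally show ?thesis unfolding x_def .
qed

definition "Bt = transpose_mat B"
definition "E = B * Pv * Bt"
definition "Et = moore_penrose E"

lemma Btc: "Bt \<in> carrier_mat n m" unfolding Bt_def using B by simp
lemma Ec: "E \<in> carrier_mat m m" unfolding E_def using B Btc Pv by simp
lemma Et: "Et \<in> carrier_mat m m" "E * Et * E = E" "Et * E * Et = Et"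
  "transpose_mat (E * Et) = E * Et" "transpose_mat (Et * E) = Et * E"
  unfolding Et_def using moore_penrose[OF Ec] by auto

lemma B_sp: "x \<in> carrier_vec n \<Longrightarrow> y \<in> carrier_vec m \<Longrightarrow> x \<bullet> (Bt *\<^sub>v y) = (B *\<^sub>v x) \<bullet> y"
proof -
  assume x: "x \<in> carrier_vec n" and y: "y \<in> carrier_vec m"
  have "x \<bullet> (Bt *\<^sub>v y) = (Bt *\<^sub>v y) \<bullet> x" using x y Btc by (intro comm_scalar_prod[of _ n]) auto
  also have "\<dots> = y \<bullet> (B *\<^sub>v x)" unfolding Bt_def by (rule transpose_vec_mult_scalar[OF B x y])
  also have "\<dots> = (B *\<^sub>v x) \<bullet> y" using x y B by (intro comm_scalar_prod[of _ m]) auto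
  finally show ?thesis .
qed

lemma E_ker: assumes z: "z \<in> carrier_vec m" and Ez: "E *\<^sub>v z = 0\<^sub>v m" shows "Bt *\<^sub>v z = 0\<^sub>v n"
proof (rule ccontr)
  assume nz: "Bt *\<^sub>v z \<noteq> 0\<^sub>v n"
  have y: "Bt *\<^sub>v z \<in> carrier_vec n" using Btc z by simp
  have eq: "E *\<^sub>v z = B *\<^sub>v (Pv *\<^sub>v (Bt *\<^sub>v z))" unfolding E_def using B Pv Btc z by (simp add: mAv)
  have "0 = z \<bullet> (E *\<^sub>v z)" using Ez z by simp
  also have "\<dots> = z \<bullet> (B *\<^sub>v (Pv *\<^sub>v (Bt *\<^sub>v z)))" using eq by simp
  also have "\<dots> = (Bt *\<^sub>v z) \<bullet> (Pv *\<^sub>v (Bt *\<^sub>v z))" unfolding Bt_def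
    by (rule transpose_vec_mult_scalar[OF B, symmetric]) (use Pv y Btc z in \<open>auto simp: Bt_def\<close>)
  finally show False using Pv_pd[OF y nz] by simp
qed

lemma Et_ker: assumes z: "z \<in> carrier_vec m" and Ez: "transpose_mat E *\<^sub>v z = 0\<^sub>v m" shows "Bt *\<^sub>v z = 0\<^sub>v n"
proof (rule ccontr)
  assume nz: "Bt *\<^sub>v z \<noteq> 0\<^sub>v n"
  define y where "y = Bt *\<^sub>v z"
  have y: "y \<in> carrier_vec n" using Btc z unfolding y_def by simp
  have tE: "transpose_mat E = B * transpose_mat Pv * Bt" unfolding E_def Bt_def using B Pv
    by (simp add: tM mA)
  have eq: "transpose_mat E *\<^sub>v z = B *\<^sub>v (transpose_mat Pv *\<^sub>v y)" unfolding tE y_def using B Pv Btc z by (simp add: mAv)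
  have "0 = z \<bullet> (transpose_mat E *\<^sub>v z)" using Ez z by simp
  also have "\<dots> = z \<bullet> (B *\<^sub>v (transpose_mat Pv *\<^sub>v y))" using eq by simp
  also have "\<dots> = y \<bullet> (transpose_mat Pv *\<^sub>v y)" unfolding y_def Bt_def
    by (rule transpose_vec_mult_scalar[OF B, symmetric]) (use Pv y Btc z in \<open>auto simp: Bt_def y_def\<close>)
  also have "\<dots> = (transpose_mat Pv *\<^sub>v y) \<bullet> y" using y Pv by (intro comm_scalar_prod[of _ n]) auto
  also have "\<dots> = y \<bullet> (Pv *\<^sub>v y)" by (rule transpose_vec_mult_scalar[OF Pv(1) y y])
  finally show False using Pv_pd[OF y] nz unfolding y_def by simp
qed

lemma EEtB: "E * (Et * B) = B"
proof -
  define Z where "Z = 1\<^sub>m m - E * Et"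
  have Z: "Z \<in> carrier_mat m m" unfolding Z_def using Ec Et by (intro minus_carrier_mat) simp
  have Zs: "transpose_mat Z = Z" unfolding Z_def using Ec Et by (simp add: tMin)
  have "Z * E = E - E * Et * E" unfolding Z_def using Ec Et by (simp add: dRm)
  hence ZE: "Z * E = 0\<^sub>m m m" using Et Ec by simp
  have "transpose_mat E * Z = transpose_mat (Z * E)" using Z Ec Zs by (simp add: tM)
  hence "transpose_mat E * Z = 0\<^sub>m m m" using ZE by simp
  have EtZ: "transpose_mat E \<in> carrier_mat m m" using Ec by simp
  have BZ: "Bt * Z = 0\<^sub>m n m" by (rule colwise_zero[OF EtZ Btc Z \<open>transpose_mat E * Z = 0\<^sub>m m m\<close> Et_ker])
  have "Z * B = transpose_mat (Bt * Z)" using Zs Z B by (simp add: tM Bt_def)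
  also have "\<dots> = 0\<^sub>m m n" using BZ by simp
  finally have ZB: "Z * B = 0\<^sub>m m n" .
  have "Z * B = B - E * Et * B" unfolding Z_def using Ec Et B by (simp add: dRm)
  hence "B - E * Et * B = 0\<^sub>m m n" using ZB by simp
  have "B = E * Et * B"
  proof (rule eq_matI)
    fix i j assume ij: "i < dim_row (E * Et * B)" "j < dim_col (E * Et * B)"
    have "(B - E * Et * B) $$ (i,j) = 0" using \<open>B - E * Et * B = 0\<^sub>m m n\<close> ij B Ec by simp
    thus "B $$ (i, j) = (E * Et * B) $$ (i, j)" using ij B Ec Et by simp
  qed (use B Ec Et in auto)
  note eB = this
  have "E * (Et * B) = E * Et * B" using Ec Et B by (simp add: mA)
  also note eB[symmetric]
  finally show ?thesis .
qed


lemma PPv: "dim_row Z = n \<Longrightarrow> P * (Pv * Z) = Z"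
proof -
  assume "dim_row Z = n"
  hence "P * (Pv * Z) = (P * Pv) * Z" using Pc Pv by (intro mA[symmetric]) auto
  thus ?thesis using Pv \<open>dim_row Z = n\<close> by simp
qed

lemma BEt: "dim_row Z = n \<Longrightarrow> B * (Pv * (Bt * (Et * (B * Z)))) = B * Z"
proof -
  assume Z: "dim_row Z = n"
  have "B * (Pv * (Bt * (Et * (B * Z)))) = E * (Et * B) * Z"
    unfolding E_def using B Pv Btc Et Z by (simp add: mA)
  thus ?thesis using EEtB by simp
qed

definition "X = Pv - Pv * Bt * Et * B * Pv"
definition "Y = Et * B * Pv"

lemma Xc: "X \<in> carrier_mat n n" unfolding X_def using Pv Btc Et B by (intro minus_carrier_mat) auto
lemma Yc: "Y \<in> carrier_mat m n" unfolding Y_def using Pv Btc Et B by auto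

lemma KX1: "P * X + Bt * Y = 1\<^sub>m n"
proof -
  have "P * X = 1\<^sub>m n - Bt * Y" unfolding X_def Y_def using Pc Pv Btc Et B
    by (simp add: dLm mA PPv)
  moreover have "1\<^sub>m n - Bt * Y + Bt * Y = 1\<^sub>m n" using Btc Yc by (intro eq_matI) auto
  ultimately show ?thesis by simp
qed

lemma KX2: "B * X = 0\<^sub>m m n"
proof -
  have "B * X = B * Pv - B * Pv" unfolding X_def using Pc Pv Btc Et B
    by (simp add: dLm mA BEt)
  thus ?thesis using B Pv by (intro eq_matI) auto
qed

definition "Mm = four_block_mat P Bt (- B) (0\<^sub>m m m)"
definition "Am = four_block_mat W Bt (- B) (0\<^sub>m m m)"
definition "Mp = moore_penrose Mm"
definition "G = four_block_mat X (0\<^sub>m n 0) Y (0\<^sub>m m 0)"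
definition "F = (mat (n + m) n (\<lambda>(i,j). if i = j then 1 else 0) :: real mat)"
definition "Ft = (mat n (n + m) (\<lambda>(i,j). if i = j then 1 else 0) :: real mat)"

lemma Mmc: "Mm \<in> carrier_mat (n+m) (n+m)" unfolding Mm_def using Pc Btc B by (intro four_block_carrier_mat) auto
lemma Amc: "Am \<in> carrier_mat (n+m) (n+m)" unfolding Am_def using Wc Btc B by (intro four_block_carrier_mat) auto
lemma Gc: "G \<in> carrier_mat (n+m) n" unfolding G_def using Xc Yc by (intro four_block_carrier_mat[of _ n n _ m 0, simplified]) auto
lemma Fc: "F \<in> carrier_mat (n+m) n" unfolding F_def by auto
lemma Ftc: "Ft \<in> carrier_mat n (n+m)" unfolding Ft_def by auto
lemma PWc: "P - W \<in> carrier_mat n n" by (rule minus_carrier_mat[OF Wc])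
lemma DMA: "Mm - Am \<in> carrier_mat (n+m) (n+m)" by (rule minus_carrier_mat[OF Amc])

lemma Mp: "Mp \<in> carrier_mat (n+m) (n+m)" "Mm * Mp * Mm = Mm" "Mp * Mm * Mp = Mp"
  "transpose_mat (Mm * Mp) = Mm * Mp" "transpose_mat (Mp * Mm) = Mp * Mm"
  unfolding Mp_def using moore_penrose[OF Mmc] by auto

lemma MG: "Mm * G = F"
proof -
  have "Mm * G = four_block_mat (P * X + Bt * Y) (P * 0\<^sub>m n 0 + Bt * 0\<^sub>m m 0)
    ((- B) * X + 0\<^sub>m m m * Y) ((- B) * 0\<^sub>m n 0 + 0\<^sub>m m m * 0\<^sub>m m 0)"
    unfolding Mm_def G_def
    by (rule mult_four_block_mat) (use Pc Btc B Xc Yc in auto)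
  also have "(- B) * X + 0\<^sub>m m m * Y = 0\<^sub>m m n" using KX2 B Xc Yc by (intro eq_matI) auto
  also have "P * X + Bt * Y = 1\<^sub>m n" by (rule KX1)
  finally have MG: "Mm * G = four_block_mat (1\<^sub>m n) (P * 0\<^sub>m n 0 + Bt * 0\<^sub>m m 0) (0\<^sub>m m n)
    ((- B) * 0\<^sub>m n 0 + 0\<^sub>m m m * 0\<^sub>m m 0)" .
  show ?thesis unfolding MG F_def using Pc Btc B by (intro eq_matI) auto
qed

lemma zero_append: "0\<^sub>v (a + b) = 0\<^sub>v a @\<^sub>v (0\<^sub>v b :: 'x :: zero vec)"
  by (intro eq_vecI) auto

lemma zero_mult_vec: "v \<in> carrier_vec c \<Longrightarrow> 0\<^sub>m r c *\<^sub>v v = (0\<^sub>v r :: real vec)"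
  by (intro eq_vecI) auto

lemma mult_zero_vec: "A \<in> carrier_mat r c \<Longrightarrow> A *\<^sub>v 0\<^sub>v c = (0\<^sub>v r :: real vec)"
  by (intro eq_vecI) auto

lemma Mm_split: assumes a: "a \<in> carrier_vec n" and d: "d \<in> carrier_vec m"
  shows "Mm *\<^sub>v (a @\<^sub>v d) = (P *\<^sub>v a + Bt *\<^sub>v d) @\<^sub>v (- (B *\<^sub>v a) + 0\<^sub>v m)"
  unfolding Mm_def using four_block_mat_mult_vec[OF Pc Btc _ _ a d, of "- B" m "0\<^sub>m m m"] B a d
  by (simp add: zero_mult_vec)

lemma Am_split: assumes a: "a \<in> carrier_vec n" and d: "d \<in> carrier_vec m"
  shows "Am *\<^sub>v (a @\<^sub>v d) = (W *\<^sub>v a + Bt *\<^sub>v d) @\<^sub>v (- (B *\<^sub>v a) + 0\<^sub>v m)"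
  unfolding Am_def using four_block_mat_mult_vec[OF Wc Btc _ _ a d, of "- B" m "0\<^sub>m m m"] B a d
  by (simp add: zero_mult_vec)

lemma kerM: assumes z: "z \<in> carrier_vec (n+m)" and Mz: "Mm *\<^sub>v z = 0\<^sub>v (n+m)"
  shows "vec_first z n = 0\<^sub>v n" "Bt *\<^sub>v vec_last z m = 0\<^sub>v n"
proof -
  define a where "a = vec_first z n"
  define d where "d = vec_last z m"
  have a: "a \<in> carrier_vec n" and d: "d \<in> carrier_vec m" unfolding a_def d_def by auto
  have z': "z = a @\<^sub>v d" unfolding a_def d_def using z by simp
  have "(P *\<^sub>v a + Bt *\<^sub>v d) @\<^sub>v (- (B *\<^sub>v a) + 0\<^sub>v m) = 0\<^sub>v n @\<^sub>v 0\<^sub>v m"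
    using Mz Mm_split[OF a d] unfolding z' zero_append by simp
  hence e1: "P *\<^sub>v a + Bt *\<^sub>v d = 0\<^sub>v n" and e2: "- (B *\<^sub>v a) + 0\<^sub>v m = 0\<^sub>v m"
    using append_vec_eq[of "P *\<^sub>v a + Bt *\<^sub>v d" n "0\<^sub>v n"] Pc a Btc d by auto
  have Ba: "B *\<^sub>v a = 0\<^sub>v m"
  proof (rule eq_vecI)
    fix i assume "i < dim_vec (0\<^sub>v m)" hence i: "i < m" by simp
    have "(- (B *\<^sub>v a) + 0\<^sub>v m) $ i = 0" using e2 i by simp
    thus "(B *\<^sub>v a) $ i = 0\<^sub>v m $ i" using i B a by simp
  qed (use B a in auto)
  have "0 = a \<bullet> (P *\<^sub>v a + Bt *\<^sub>v d)" using e1 a by simp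
  also have "\<dots> = a \<bullet> (P *\<^sub>v a) + a \<bullet> (Bt *\<^sub>v d)" using a d Pc Btc by (intro scalar_prod_add_distrib[of _ n]) auto
  also have "a \<bullet> (Bt *\<^sub>v d) = 0" using B_sp[OF a d] Ba d by simp
  finally have "a \<bullet> (P *\<^sub>v a) = 0" by simp
  hence a0: "a = 0\<^sub>v n" using P_pd[OF a] by fastforce
  thus "vec_first z n = 0\<^sub>v n" unfolding a_def .
  have "P *\<^sub>v a = 0\<^sub>v n" using a0 Pc by (simp add: mult_zero_vec)
  hence "0\<^sub>v n + Bt *\<^sub>v d = 0\<^sub>v n" using e1 by simp
  thus "Bt *\<^sub>v vec_last z m = 0\<^sub>v n" unfolding d_def[symmetric] using Btc d by simp
qed

lemma kerMA: assumes z: "z \<in> carrier_vec (n+m)" and Mz: "Mm *\<^sub>v z = 0\<^sub>v (n+m)"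
  shows "Am *\<^sub>v z = 0\<^sub>v (n+m)"
proof -
  define a where "a = vec_first z n"
  define d where "d = vec_last z m"
  have a: "a \<in> carrier_vec n" and d: "d \<in> carrier_vec m" unfolding a_def d_def by auto
  have z': "z = a @\<^sub>v d" unfolding a_def d_def using z by simp
  have a0: "a = 0\<^sub>v n" and Btd: "Bt *\<^sub>v d = 0\<^sub>v n" using kerM[OF z Mz] unfolding a_def d_def by auto
  have "Am *\<^sub>v z = (W *\<^sub>v a + Bt *\<^sub>v d) @\<^sub>v (- (B *\<^sub>v a) + 0\<^sub>v m)" unfolding z' by (rule Am_split[OF a d])
  also have "\<dots> = 0\<^sub>v n @\<^sub>v 0\<^sub>v m" unfolding a0 Btd using Wc B by (simp add: mult_zero_vec)
  finally show ?thesis by (simp add: zero_append)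
qed

lemma EtEq: "Et = transpose_mat E * (transpose_mat Et * Et)"
proof -
  have "Et = Et * E * Et" using Et(3) by simp
  also have "\<dots> = transpose_mat (Et * E) * Et" by (simp only: Et(5))
  also have "\<dots> = transpose_mat E * (transpose_mat Et * Et)" using Et(1) Ec by (simp add: tM mA)
  finally show ?thesis .
qed

lemma G_perp: assumes j: "j < n" and z: "z \<in> carrier_vec (n+m)" and Mz: "Mm *\<^sub>v z = 0\<^sub>v (n+m)"
  shows "col G j \<bullet> z = 0"
proof -
  define a where "a = vec_first z n"
  define d where "d = vec_last z m"
  have a: "a \<in> carrier_vec n" and d: "d \<in> carrier_vec m" unfolding a_def d_def by auto
  have z': "z = a @\<^sub>v d" unfolding a_def d_def using z by simp
  have a0: "a = 0\<^sub>v n" and Btd: "Bt *\<^sub>v d = 0\<^sub>v n" using kerM[OF z Mz] unfolding a_def d_def by auto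
  have cG: "col G j = col X j @\<^sub>v col Y j" unfolding G_def
    by (rule col_four_block_mat(1)[OF Xc zero_carrier_mat Yc zero_carrier_mat j])
  define h where "h = col (B * Pv) j"
  have h: "h \<in> carrier_vec m" unfolding h_def carrier_vec_def using B Pv(1) by simp
  have cY: "col Y j = Et *\<^sub>v h"
  proof -
    have "Y = Et * (B * Pv)" unfolding Y_def using Et(1) B Pv(1) by (simp add: mA)
    moreover have "col (Et * (B * Pv)) j = Et *\<^sub>v col (B * Pv) j"
      by (rule col_mult2[OF Et(1) mult_carrier_mat[OF B Pv(1)] j])
    ultimately show ?thesis unfolding h_def by simp
  qed
  have Ed: "E *\<^sub>v d = 0\<^sub>v m" unfolding E_def using B Pv Btc d Btd by (simp add: mAv mult_zero_vec)
  define g where "g = transpose_mat Et *\<^sub>v (Et *\<^sub>v h)"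
  have g: "g \<in> carrier_vec m" unfolding g_def using Et h by simp
  have "Et *\<^sub>v h = (transpose_mat E * (transpose_mat Et * Et)) *\<^sub>v h" by (simp only: EtEq[symmetric])
  also have "\<dots> = transpose_mat E *\<^sub>v g" unfolding g_def using Et(1) Ec h by (simp add: mAv)
  finally have "col Y j = transpose_mat E *\<^sub>v g" unfolding cY .
  hence "col Y j \<bullet> d = g \<bullet> (E *\<^sub>v d)" using transpose_vec_mult_scalar[OF Ec d g] by simp
  hence Yd: "col Y j \<bullet> d = 0" using Ed g by simp
  have cX: "col X j \<in> carrier_vec n" unfolding carrier_vec_def using Xc by simp
  have cYc: "col Y j \<in> carrier_vec m" unfolding carrier_vec_def using Yc by simp
  have "col G j \<bullet> z = col X j \<bullet> a + col Y j \<bullet> d" unfolding cG z'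
    by (rule scalar_prod_append[OF cX cYc a d])
  thus ?thesis using Yd a0 cX by simp
qed

definition "Q = Mp * Mm"
lemma Qc: "Q \<in> carrier_mat (n+m) (n+m)" unfolding Q_def using Mp Mmc by simp
lemma QQ: "Q * Q = Q" unfolding Q_def using Mp Mmc by (simp add: mA)
lemma MQ: "Mm * Q = Mm" unfolding Q_def using Mp Mmc by (simp add: mA)
lemma QMp: "Q * Mp = Mp" unfolding Q_def using Mp Mmc by (simp add: mA)
lemma Qs: "transpose_mat Q = Q" unfolding Q_def using Mp by simp

lemma Qfix: assumes g: "g \<in> carrier_vec (n+m)" and perp: "\<And>z. z \<in> carrier_vec (n+m) \<Longrightarrow> Mm *\<^sub>v z = 0\<^sub>v (n+m) \<Longrightarrow> g \<bullet> z = 0"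
  shows "Q *\<^sub>v g = g"
proof -
  define r where "r = g - Q *\<^sub>v g"
  have Qg: "Q *\<^sub>v g \<in> carrier_vec (n+m)" using Qc g by simp
  have r: "r \<in> carrier_vec (n+m)" unfolding r_def using g Qc by simp
  have "Mm *\<^sub>v r = Mm *\<^sub>v g - Mm *\<^sub>v (Q *\<^sub>v g)" unfolding r_def using Mmc g Qg by (simp add: mult_minus_distrib_mat_vec)
  also have "Mm *\<^sub>v (Q *\<^sub>v g) = Mm *\<^sub>v g" using MQ Mmc Qc g by (simp add: mAv[symmetric])
  finally have "Mm *\<^sub>v r = 0\<^sub>v (n+m)" using Mmc g by (intro eq_vecI) auto
  hence gr: "g \<bullet> r = 0" using perp r by simp
  have "Q *\<^sub>v r = Q *\<^sub>v g - Q *\<^sub>v (Q *\<^sub>v g)" unfolding r_def using Qc g Qg by (simp add: mult_minus_distrib_mat_vec)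
  also have "Q *\<^sub>v (Q *\<^sub>v g) = Q *\<^sub>v g" using QQ Qc g by (simp add: mAv[symmetric])
  finally have Qr: "Q *\<^sub>v r = 0\<^sub>v (n+m)" using Qc g by (intro eq_vecI) auto
  have "(Q *\<^sub>v g) \<bullet> r = (transpose_mat Q *\<^sub>v g) \<bullet> r" using Qs by simp
  also have "\<dots> = g \<bullet> (Q *\<^sub>v r)" by (rule transpose_vec_mult_scalar[OF Qc r g])
  finally have Qgr: "(Q *\<^sub>v g) \<bullet> r = 0" using Qr g by simp
  have "r \<bullet> r = g \<bullet> r - (Q *\<^sub>v g) \<bullet> r" unfolding r_def
    by (rule minus_scalar_prod_distrib) (use g Qg r in \<open>auto simp: r_def\<close>)
  hence "r \<bullet> r = 0" using gr Qgr by simp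
  hence r0: "r = 0\<^sub>v (n+m)" using real_sp_self_0 r by fastforce
  show ?thesis
  proof (rule eq_vecI)
    fix i assume i: "i < dim_vec g"
    have "r $ i = 0" using r0 i g by simp
    thus "(Q *\<^sub>v g) $ i = g $ i" using i g Qg Qc unfolding r_def by simp
  qed (use g Qg Qc in auto)
qed


lemma sum_delta1: "(\<Sum>t\<in>{0..<k::nat}. (if i = t then 1 else 0) * (f t :: real)) = (if i < k then f i else 0)"
proof -
  have "(\<Sum>t\<in>{0..<k}. (if i = t then 1 else 0) * f t) = (\<Sum>t\<in>{0..<k}. if i = t then f t else 0)"
    by (rule sum.cong) auto
  also have "\<dots> = (if i \<in> {0..<k} then f i else 0)" by (rule sum.delta') simp
  finally show ?thesis by simp
qed

lemma sum_delta2: "(\<Sum>t\<in>{0..<k::nat}. (f t :: real) * (if t = j then 1 else 0)) = (if j < k then f j else 0)"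
proof -
  have "(\<Sum>t\<in>{0..<k}. f t * (if t = j then 1 else 0)) = (\<Sum>t\<in>{0..<k}. if t = j then f t else 0)"
    by (rule sum.cong) auto
  also have "\<dots> = (if j \<in> {0..<k} then f j else 0)" by (rule sum.delta) simp
  finally show ?thesis by simp
qed

lemma FZ: assumes Z: "(Z::real mat) \<in> carrier_mat n c"
  shows "F * Z = mat (n+m) c (\<lambda>(i,j). if i < n then Z $$ (i,j) else 0)"
proof (rule eq_matI)
  fix i j assume "i < dim_row (mat (n+m) c (\<lambda>(i,j). if i < n then Z $$ (i,j) else 0))"
    "j < dim_col (mat (n+m) c (\<lambda>(i,j). if i < n then Z $$ (i,j) else 0))"
  hence i: "i < n + m" and j: "j < c" by auto
  have "(F * Z) $$ (i,j) = (\<Sum>t\<in>{0..<n}. (if i = t then 1 else 0) * Z $$ (t,j))"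
    unfolding F_def using i j Z by (simp add: scalar_prod_def)
  also have "\<dots> = (if i < n then Z $$ (i,j) else 0)" using sum_delta1[where i=i and k=n and f="\<lambda>t. Z $$ (t,j)"] by simp
  finally show "(F * Z) $$ (i,j) = mat (n+m) c (\<lambda>(i,j). if i < n then Z $$ (i,j) else 0) $$ (i,j)"
    using i j by simp
qed (use Z in \<open>simp_all add: F_def\<close>)

lemma ZFt: assumes Z: "(Z::real mat) \<in> carrier_mat r n"
  shows "Z * Ft = mat r (n+m) (\<lambda>(i,j). if j < n then Z $$ (i,j) else 0)"
proof (rule eq_matI)
  fix i j assume "i < dim_row (mat r (n+m) (\<lambda>(i,j). if j < n then Z $$ (i,j) else 0))"
    "j < dim_col (mat r (n+m) (\<lambda>(i,j). if j < n then Z $$ (i,j) else 0))"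
  hence i: "i < r" and j: "j < n + m" by auto
  have "(Z * Ft) $$ (i,j) = (\<Sum>t\<in>{0..<n}. Z $$ (i,t) * (if t = j then 1 else 0))"
    unfolding Ft_def using i j Z by (simp add: scalar_prod_def)
  also have "\<dots> = (if j < n then Z $$ (i,j) else 0)" using sum_delta2[where j=j and k=n and f="\<lambda>t. Z $$ (i,t)"] by simp
  finally show "(Z * Ft) $$ (i,j) = mat r (n+m) (\<lambda>(i,j). if j < n then Z $$ (i,j) else 0) $$ (i,j)"
    using i j by simp
qed (use Z in \<open>simp_all add: Ft_def\<close>)

lemma FtZ: assumes Z: "(Z::real mat) \<in> carrier_mat (n+m) c"
  shows "Ft * Z = mat n c (\<lambda>(i,j). Z $$ (i,j))"
proof (rule eq_matI)
  fix i j assume "i < dim_row (mat n c (\<lambda>(i,j). Z $$ (i,j)))" "j < dim_col (mat n c (\<lambda>(i,j). Z $$ (i,j)))"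
  hence i: "i < n" and j: "j < c" by auto
  have "(Ft * Z) $$ (i,j) = (\<Sum>t\<in>{0..<n+m}. (if i = t then 1 else 0) * Z $$ (t,j))"
    unfolding Ft_def using i j Z by (simp add: scalar_prod_def)
  also have "\<dots> = Z $$ (i,j)" using i sum_delta1[where i=i and k="n+m" and f="\<lambda>t. Z $$ (t,j)"] by simp
  finally show "(Ft * Z) $$ (i,j) = mat n c (\<lambda>(i,j). Z $$ (i,j)) $$ (i,j)" using i j by simp
qed (use Z in \<open>simp_all add: Ft_def\<close>)

lemma colG: "j < n \<Longrightarrow> col G j \<in> carrier_vec (n+m)"
  unfolding carrier_vec_def using Gc by simp

lemma MpF: "Mp * F = G"
proof (rule mat_col_eqI)
  fix j assume "j < dim_col G" hence j: "j < n" using Gc by simp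
  have cF: "col F j = Mm *\<^sub>v col G j" using MG col_mult2[OF Mmc Gc j] by simp
  have "col (Mp * F) j = Mp *\<^sub>v col F j" by (rule col_mult2[OF Mp(1) Fc j])
  also have "\<dots> = Q *\<^sub>v col G j" unfolding cF Q_def
    by (rule assoc_mult_mat_vec[symmetric, OF Mp(1) Mmc colG[OF j]])
  also have "\<dots> = col G j" by (rule Qfix[OF colG[OF j]]) (rule G_perp[OF j])
  finally show "col (Mp * F) j = col G j" .
qed (use Mp(1) Gc in \<open>simp_all add: F_def\<close>)

lemma FtG: "Ft * G = X"
proof -
  have "Ft * G = mat n n (\<lambda>(i,j). G $$ (i,j))" using FtZ[OF Gc] .
  also have "\<dots> = X" unfolding G_def using Xc Yc by (intro eq_matI) auto
  finally show ?thesis .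
qed

lemma Dblock: "Mm - Am = F * ((P - W) * Ft)"
proof -
  have PW: "P - W \<in> carrier_mat n n" by (rule PWc)
  have R: "(P - W) * Ft = mat n (n+m) (\<lambda>(i,j). if j < n then (P - W) $$ (i,j) else 0)" by (rule ZFt[OF PW])
  have Rc: "(P - W) * Ft \<in> carrier_mat n (n+m)" by (rule mult_carrier_mat[OF PW Ftc])
  have "F * ((P - W) * Ft) = mat (n+m) (n+m) (\<lambda>(i,j). if i < n then ((P - W) * Ft) $$ (i,j) else 0)"
    by (rule FZ[OF Rc])
  also have "\<dots> = Mm - Am" unfolding R Mm_def Am_def using Pc Wc Btc B
    by (intro eq_matI) auto
  finally show ?thesis by simp
qed

definition "S = Mp * (Mm - Am)"
definition "K = X * (P - W)"

lemma Sc: "S \<in> carrier_mat (n+m) (n+m)" unfolding S_def using Mp(1) DMA by simp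
lemma Kc: "K \<in> carrier_mat n n" unfolding K_def using Xc PWc by simp
lemma Uc: "G * (P - W) \<in> carrier_mat (n+m) n" using Gc PWc by simp

lemma S_UV: "S = (G * (P - W)) * Ft"
proof -
  have "S = Mp * (F * ((P - W) * Ft))" unfolding S_def Dblock ..
  also have "\<dots> = (Mp * F) * ((P - W) * Ft)" using Mp(1) Fc Ftc Wc by (simp add: mA)
  also have "\<dots> = (G * (P - W)) * Ft" unfolding MpF using Gc Ftc Wc by (simp add: mA)
  finally show ?thesis .
qed

lemma K_VU: "Ft * (G * (P - W)) = K"
proof -
  have "Ft * (G * (P - W)) = (Ft * G) * (P - W)" using Gc Ftc Wc by (simp add: mA)
  thus ?thesis unfolding FtG K_def .
qed

lemma ev_S_K: assumes l: "l \<noteq> 0" and ev: "eigenvalue (map_mat complex_of_real S) l"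
  shows "eigenvalue (map_mat complex_of_real K) l"
proof -
  let ?U = "map_mat complex_of_real (G * (P - W))" and ?V = "map_mat complex_of_real Ft"
  have "map_mat complex_of_real S = ?U * ?V" unfolding S_UV by (rule of_real_hom.mat_hom_mult[OF Uc Ftc])
  with ev have "eigenvalue (?U * ?V) l" by simp
  from ev_UV[OF _ _ l this] Uc Ftc have "eigenvalue (?V * ?U) l" by simp
  moreover have "?V * ?U = map_mat complex_of_real K" unfolding K_VU[symmetric]
    by (rule of_real_hom.mat_hom_mult[OF Ftc Uc, symmetric])
  ultimately show ?thesis by simp
qed

lemma ev_K_S: assumes l: "l \<noteq> 0" and ev: "eigenvalue (map_mat complex_of_real K) l"
  shows "eigenvalue (map_mat complex_of_real S) l"
proof -
  let ?U = "map_mat complex_of_real (G * (P - W))" and ?V = "map_mat complex_of_real Ft"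
  have "map_mat complex_of_real K = ?V * ?U" unfolding K_VU[symmetric]
    by (rule of_real_hom.mat_hom_mult[OF Ftc Uc])
  with ev have "eigenvalue (?V * ?U) l" by simp
  from ev_UV[OF _ _ l this] Uc Ftc have "eigenvalue (?U * ?V) l" by simp
  moreover have "?U * ?V = map_mat complex_of_real S" unfolding S_UV
    by (rule of_real_hom.mat_hom_mult[OF Uc Ftc, symmetric])
  ultimately show ?thesis by simp
qed

lemma K_no1: assumes u: "u \<in> carrier_vec n" and Ku: "K *\<^sub>v u = u" shows "u = 0\<^sub>v n"
proof (rule ccontr)
  assume u0: "u \<noteq> 0\<^sub>v n"
  define f where "f = (P - W) *\<^sub>v u"
  have f: "f \<in> carrier_vec n" unfolding f_def using PWc u by simp
  have Xf: "X *\<^sub>v f = u" using Ku unfolding K_def f_def using Xc PWc u by (simp add: mAv)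
  have Bu: "B *\<^sub>v u = 0\<^sub>v m"
  proof -
    have "B *\<^sub>v u = (B * X) *\<^sub>v f" unfolding Xf[symmetric] using B Xc f by (simp add: mAv)
    also have "\<dots> = 0\<^sub>v m" unfolding KX2 using f by (simp add: zero_mult_vec)
    finally show ?thesis .
  qed
  define y where "y = Y *\<^sub>v f"
  have y: "y \<in> carrier_vec m" unfolding y_def using Yc f by simp
  have "P *\<^sub>v u + Bt *\<^sub>v y = (P * X) *\<^sub>v f + (Bt * Y) *\<^sub>v f"
    unfolding Xf[symmetric] y_def using Pc Xc Btc Yc f by (simp add: mAv)
  also have "\<dots> = (P * X + Bt * Y) *\<^sub>v f" using Pc Xc Btc Yc f
    by (simp add: add_mult_distrib_mat_vec[of _ n n])
  also have "\<dots> = f" unfolding KX1 using f by simp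
  also have "\<dots> = P *\<^sub>v u - W *\<^sub>v u" unfolding f_def using Pc Wc u by (simp add: minus_mult_distrib_mat_vec)
  finally have eq: "P *\<^sub>v u + Bt *\<^sub>v y = P *\<^sub>v u - W *\<^sub>v u" .
  have WB: "W *\<^sub>v u + Bt *\<^sub>v y = 0\<^sub>v n"
  proof (rule eq_vecI)
    fix i assume "i < dim_vec (0\<^sub>v n)" hence i: "i < n" by simp
    have "(P *\<^sub>v u + Bt *\<^sub>v y) $ i = (P *\<^sub>v u - W *\<^sub>v u) $ i" using eq by simp
    thus "(W *\<^sub>v u + Bt *\<^sub>v y) $ i = 0\<^sub>v n $ i" using i Pc Wc Btc u y by simp
  qed (use Wc u Btc y in simp_all)
  have "0 = u \<bullet> (W *\<^sub>v u + Bt *\<^sub>v y)" using WB u by simp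
  also have "\<dots> = u \<bullet> (W *\<^sub>v u) + u \<bullet> (Bt *\<^sub>v y)"
    by (rule scalar_prod_add_distrib[of _ n]) (use u Wc Btc y in simp_all)
  also have "u \<bullet> (Bt *\<^sub>v y) = 0" using B_sp[OF u y] Bu y by simp
  finally have "u \<bullet> (W *\<^sub>v u) = 0" by simp
  thus False using W_pd[OF u u0] by simp
qed

lemma K_no1c: "\<not> eigenvalue (map_mat complex_of_real K) 1"
proof
  assume "eigenvalue (map_mat complex_of_real K) 1"
  hence "det (char_matrix (map_mat complex_of_real K) 1) = 0"
    using eigenvalue_det[of "map_mat complex_of_real K" n 1] Kc by simp
  moreover have "char_matrix (map_mat complex_of_real K) 1 = map_mat complex_of_real (char_matrix K 1)"
    unfolding char_matrix_def using Kc by (intro eq_matI) auto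
  ultimately have "complex_of_real (det (char_matrix K 1)) = 0" by (simp del: of_real_eq_0_iff)
  hence "det (char_matrix K 1) = 0" by simp
  hence "eigenvalue K 1" using eigenvalue_det[OF Kc] by simp
  then obtain u where "eigenvector K u 1" unfolding eigenvalue_def by auto
  hence u: "u \<in> carrier_vec n" "u \<noteq> 0\<^sub>v n" "K *\<^sub>v u = u" using Kc unfolding eigenvector_def by auto
  from K_no1[OF u(1) u(3)] u(2) show False by simp
qed


lemma QS: "Q * S = S"
proof -
  have "Q * S = (Q * Mp) * (Mm - Am)" unfolding S_def using Qc Mp(1) DMA by (simp add: mA)
  thus ?thesis unfolding QMp S_def .
qed

lemma QSv: "y \<in> carrier_vec (n+m) \<Longrightarrow> Q *\<^sub>v (S *\<^sub>v y) = S *\<^sub>v y"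
  using QS Qc Sc by (metis assoc_mult_mat_vec)

lemma S_pow_Suc: "v \<in> carrier_vec (n+m) \<Longrightarrow> S ^\<^sub>m Suc k *\<^sub>v v = S *\<^sub>v (S ^\<^sub>m k *\<^sub>v v)"
proof -
  assume v: "v \<in> carrier_vec (n+m)"
  have "S ^\<^sub>m Suc k = S * S ^\<^sub>m k" using pow_comm[OF Sc, of k] by simp
  thus ?thesis using Sc v by (simp add: mAv)
qed

lemma S_pow_Suc': "v \<in> carrier_vec (n+m) \<Longrightarrow> S ^\<^sub>m Suc k *\<^sub>v v = S ^\<^sub>m k *\<^sub>v (S *\<^sub>v v)"
proof -
  assume v: "v \<in> carrier_vec (n+m)"
  have "S ^\<^sub>m Suc k = S ^\<^sub>m k * S" by simp
  thus ?thesis using Sc v by (simp add: mAv)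
qed

lemma QSk: assumes e: "e \<in> carrier_vec (n+m)"
  shows "Q *\<^sub>v (S ^\<^sub>m k *\<^sub>v (Q *\<^sub>v e)) = S ^\<^sub>m k *\<^sub>v (Q *\<^sub>v e)"
proof (cases k)
  case 0
  have "Q *\<^sub>v (Q *\<^sub>v e) = (Q * Q) *\<^sub>v e" using Qc e by (simp add: assoc_mult_mat_vec[of _ "n+m" "n+m"])
  thus ?thesis using 0 Qc Sc e QQ by simp
next
  case (Suc k')
  have v: "S ^\<^sub>m k' *\<^sub>v (Q *\<^sub>v e) \<in> carrier_vec (n+m)"
    by (rule mult_mat_vec_carrier[OF pow_carrier_mat[OF Sc] mult_mat_vec_carrier[OF Qc e]])
  show ?thesis unfolding Suc S_pow_Suc[OF mult_mat_vec_carrier[OF Qc e]] by (rule QSv[OF v])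
qed

lemma Svec: assumes z: "z \<in> carrier_vec (n+m)" and Qz: "Q *\<^sub>v z = z"
  shows "S *\<^sub>v z = z - Mp *\<^sub>v (Am *\<^sub>v z)"
proof -
  have "S *\<^sub>v z = Mp *\<^sub>v ((Mm - Am) *\<^sub>v z)" unfolding S_def using Mp(1) DMA z
    by (simp add: assoc_mult_mat_vec[of _ "n+m" "n+m"])
  also have "(Mm - Am) *\<^sub>v z = Mm *\<^sub>v z - Am *\<^sub>v z" using Mmc Amc z by (simp add: minus_mult_distrib_mat_vec)
  also have "Mp *\<^sub>v (Mm *\<^sub>v z - Am *\<^sub>v z) = Mp *\<^sub>v (Mm *\<^sub>v z) - Mp *\<^sub>v (Am *\<^sub>v z)"
    using Mp(1) Mmc Amc z by (simp add: mult_minus_distrib_mat_vec)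
  also have "Mp *\<^sub>v (Mm *\<^sub>v z) = Q *\<^sub>v z" unfolding Q_def using Mp(1) Mmc z
    by (simp add: assoc_mult_mat_vec[of _ "n+m" "n+m"])
  finally show ?thesis using Qz by simp
qed

lemma Am_w: assumes e: "e \<in> carrier_vec (n+m)" shows "Am *\<^sub>v (e - Q *\<^sub>v e) = 0\<^sub>v (n+m)"
proof (rule kerMA)
  show w: "e - Q *\<^sub>v e \<in> carrier_vec (n+m)" using e Qc by simp
  have "Mm *\<^sub>v (e - Q *\<^sub>v e) = Mm *\<^sub>v e - Mm *\<^sub>v (Q *\<^sub>v e)" using Mmc Qc e by (simp add: mult_minus_distrib_mat_vec)
  also have "Mm *\<^sub>v (Q *\<^sub>v e) = Mm *\<^sub>v e" using MQ Mmc Qc e by (metis assoc_mult_mat_vec)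
  finally show "Mm *\<^sub>v (e - Q *\<^sub>v e) = 0\<^sub>v (n+m)" using Mmc e by (intro eq_vecI) auto
qed

lemma iter_formula:
  assumes x0: "x0 \<in> carrier_vec (n+m)" and ys: "ys \<in> carrier_vec (n+m)" and b: "b = Am *\<^sub>v ys"
  shows "iter_seq Mp Am b x0 k = ys + ((x0 - ys) - Q *\<^sub>v (x0 - ys)) + S ^\<^sub>m k *\<^sub>v (Q *\<^sub>v (x0 - ys))"
proof (induction k)
  case 0
  show ?case using x0 ys Qc Sc by (intro eq_vecI) auto
next
  case (Suc k)
  define e where "e = x0 - ys"
  define w where "w = e - Q *\<^sub>v e"
  define z where "z = S ^\<^sub>m k *\<^sub>v (Q *\<^sub>v e)"
  have e: "e \<in> carrier_vec (n+m)" unfolding e_def using x0 ys by simp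
  have w: "w \<in> carrier_vec (n+m)" unfolding w_def using e Qc by simp
  have z: "z \<in> carrier_vec (n+m)" unfolding z_def
    by (rule mult_mat_vec_carrier[OF pow_carrier_mat[OF Sc] mult_mat_vec_carrier[OF Qc e]])
  have Qz: "Q *\<^sub>v z = z" unfolding z_def by (rule QSk[OF e])
  have Aw: "Am *\<^sub>v w = 0\<^sub>v (n+m)" unfolding w_def by (rule Am_w[OF e])
  define v where "v = Am *\<^sub>v z"
  have v: "v \<in> carrier_vec (n+m)" unfolding v_def using Amc z by simp
  have IH: "iter_seq Mp Am b x0 k = ys + w + z" using Suc unfolding w_def z_def e_def .
  have yw: "ys + w \<in> carrier_vec (n+m)" using ys w by simp
  have Ax: "Am *\<^sub>v (ys + w + z) = b + Am *\<^sub>v w + v" unfolding b v_def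
    unfolding mult_add_distrib_mat_vec[OF Amc yw z] mult_add_distrib_mat_vec[OF Amc ys w] ..
  have bA: "b - Am *\<^sub>v (ys + w + z) = (-1) \<cdot>\<^sub>v v" unfolding Ax Aw using Amc ys v
    by (intro eq_vecI) (auto simp: b)
  have Mpv: "Mp *\<^sub>v ((-1) \<cdot>\<^sub>v v) = (-1) \<cdot>\<^sub>v (Mp *\<^sub>v v)" by (rule mult_mat_vec[OF Mp(1) v])
  have Sz: "S ^\<^sub>m Suc k *\<^sub>v (Q *\<^sub>v e) = z - Mp *\<^sub>v v"
    unfolding S_pow_Suc[OF mult_mat_vec_carrier[OF Qc e]] z_def[symmetric] v_def by (rule Svec[OF z Qz])
  have "iter_seq Mp Am b x0 (Suc k) = (ys + w + z) + Mp *\<^sub>v (b - Am *\<^sub>v (ys + w + z))" using IH by simp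
  also have "\<dots> = ys + w + (z - Mp *\<^sub>v v)" unfolding bA Mpv using ys w z v Mp(1) by (intro eq_vecI) auto
  finally show ?case unfolding Sz[symmetric] w_def e_def .
qed


lemma mult_vec_sum: assumes A: "(A::real mat) \<in> carrier_mat N N" and u: "u \<in> carrier_vec N" and i: "i < N"
  shows "(A *\<^sub>v u) $ i = (\<Sum>j<N. A $$ (i,j) * u $ j)"
  using A u i by (simp add: scalar_prod_def atLeast0LessThan)

lemma conv_suff:
  assumes ys: "ys \<in> carrier_vec (n+m)" and b: "b = Am *\<^sub>v ys"
    and ev: "\<And>l. eigenvalue (map_mat complex_of_real S) l \<Longrightarrow> norm l < 1"
  shows "iteration_convergent (n+m) Mm Am b"
  unfolding iteration_convergent_def Mp_def[symmetric]
proof (intro ballI)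
  fix x0 :: "real vec" assume x0: "x0 \<in> carrier_vec (n+m)"
  define e where "e = x0 - ys"
  define w where "w = e - Q *\<^sub>v e"
  define u where "u = Q *\<^sub>v e"
  have e: "e \<in> carrier_vec (n+m)" unfolding e_def using x0 ys by simp
  have w: "w \<in> carrier_vec (n+m)" unfolding w_def using e Qc by simp
  have u: "u \<in> carrier_vec (n+m)" unfolding u_def using e Qc by simp
  define y where "y = ys + w"
  have y: "y \<in> carrier_vec (n+m)" unfolding y_def using ys w by simp
  have Aw: "Am *\<^sub>v w = 0\<^sub>v (n+m)" unfolding w_def by (rule Am_w[OF e])
  have "Am *\<^sub>v y = Am *\<^sub>v ys + Am *\<^sub>v w" unfolding y_def by (rule mult_add_distrib_mat_vec[OF Amc ys w])
  hence Ay: "Am *\<^sub>v y = b" unfolding Aw b using Amc ys by (intro eq_vecI) auto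
  have "vec_tendsto (n+m) (iter_seq Mp Am b x0) y" unfolding vec_tendsto_def
  proof (intro allI impI)
    fix i assume i: "i < n + m"
    have xk: "iter_seq Mp Am b x0 k $ i = ys $ i + w $ i + (\<Sum>j<n+m. (S ^\<^sub>m k) $$ (i,j) * u $ j)" for k
    proof -
      have "iter_seq Mp Am b x0 k = ys + (e - Q *\<^sub>v e) + S ^\<^sub>m k *\<^sub>v (Q *\<^sub>v e)"
        unfolding iter_formula[OF x0 ys b] e_def ..
      hence "iter_seq Mp Am b x0 k = ys + w + S ^\<^sub>m k *\<^sub>v u" by (simp only: w_def u_def)
      moreover have "S ^\<^sub>m k *\<^sub>v u \<in> carrier_vec (n+m)" by (rule mult_mat_vec_carrier[OF pow_carrier_mat[OF Sc] u])
      hence "dim_vec (S ^\<^sub>m k *\<^sub>v u) = n + m" by (rule carrier_vecD)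
      moreover have "dim_vec w = n + m" using w by (rule carrier_vecD)
      ultimately show ?thesis using i mult_vec_sum[OF pow_carrier_mat[OF Sc] u i] by simp
    qed
    have "(\<lambda>k. (\<Sum>j<n+m. (S ^\<^sub>m k) $$ (i,j) * u $ j)) \<longlonglongrightarrow> (\<Sum>j<n+m. 0 * u $ j)"
      by (intro tendsto_sum tendsto_mult tendsto_const SP1[OF Sc _ ev i]) (use i in auto)
    hence "(\<lambda>k. ys $ i + w $ i + (\<Sum>j<n+m. (S ^\<^sub>m k) $$ (i,j) * u $ j)) \<longlonglongrightarrow> ys $ i + w $ i + 0"
      by (intro tendsto_add tendsto_const) auto
    thus "(\<lambda>k. iter_seq Mp Am b x0 k $ i) \<longlonglongrightarrow> y $ i" unfolding xk y_def using i ys w by simp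
  qed
  thus "\<exists>y\<in>carrier_vec (n + m). Am *\<^sub>v y = b \<and> vec_tendsto (n + m) (iter_seq Mp Am b x0) y"
    using y Ay by blast
qed

lemma conv_nec:
  assumes ys: "ys \<in> carrier_vec (n+m)" and b: "b = Am *\<^sub>v ys"
    and conv: "iteration_convergent (n+m) Mm Am b"
    and ev: "eigenvalue (map_mat complex_of_real S) l" and l1: "l \<noteq> 1"
  shows "norm l < 1"
proof (rule SP2[OF Sc _ ev l1])
  have c1: "convergent (\<lambda>k. (S ^\<^sub>m k *\<^sub>v (Q *\<^sub>v u)) $ i)" if u: "u \<in> carrier_vec (n+m)" and i: "i < n+m" for u i
  proof -
    define x0 where "x0 = ys + u"
    have x0: "x0 \<in> carrier_vec (n+m)" unfolding x0_def using ys u by simp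
    have e: "x0 - ys = u" unfolding x0_def using ys u by (intro eq_vecI) auto
    from conv[unfolded iteration_convergent_def Mp_def[symmetric]] x0 obtain y where
      "vec_tendsto (n+m) (iter_seq Mp Am b x0) y" by blast
    hence lim: "(\<lambda>k. iter_seq Mp Am b x0 k $ i) \<longlonglongrightarrow> y $ i" using i unfolding vec_tendsto_def by blast
    define w where "w = u - Q *\<^sub>v u"
    have w: "w \<in> carrier_vec (n+m)" unfolding w_def using u Qc by simp
    have xk: "iter_seq Mp Am b x0 k $ i = ys $ i + w $ i + (S ^\<^sub>m k *\<^sub>v (Q *\<^sub>v u)) $ i" for k
    proof -
      have "iter_seq Mp Am b x0 k = ys + w + S ^\<^sub>m k *\<^sub>v (Q *\<^sub>v u)"
        unfolding iter_formula[OF x0 ys b] e w_def ..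
      moreover have "S ^\<^sub>m k *\<^sub>v (Q *\<^sub>v u) \<in> carrier_vec (n+m)"
        by (rule mult_mat_vec_carrier[OF pow_carrier_mat[OF Sc] mult_mat_vec_carrier[OF Qc u]])
      hence "dim_vec (S ^\<^sub>m k *\<^sub>v (Q *\<^sub>v u)) = n + m" by (rule carrier_vecD)
      moreover have "dim_vec w = n + m" using w by (rule carrier_vecD)
      ultimately show ?thesis using i by simp
    qed
    have "(\<lambda>k. iter_seq Mp Am b x0 k $ i - (ys $ i + w $ i)) \<longlonglongrightarrow> y $ i - (ys $ i + w $ i)"
      by (intro tendsto_diff lim tendsto_const)
    hence "(\<lambda>k. (S ^\<^sub>m k *\<^sub>v (Q *\<^sub>v u)) $ i) \<longlonglongrightarrow> y $ i - (ys $ i + w $ i)" unfolding xk by simp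
    thus ?thesis unfolding convergent_def by blast
  qed
  show "\<forall>v\<in>carrier_vec (n + m). \<forall>i<n + m. convergent (\<lambda>k. (S ^\<^sub>m k *\<^sub>v v) $ i)"
  proof (intro ballI allI impI)
    fix v :: "real vec" and i assume v: "v \<in> carrier_vec (n+m)" and i: "i < n + m"
    have Sv: "S *\<^sub>v v \<in> carrier_vec (n+m)" using Sc v by simp
    have "(S ^\<^sub>m Suc k *\<^sub>v v) $ i = (S ^\<^sub>m k *\<^sub>v (Q *\<^sub>v (S *\<^sub>v v))) $ i" for k
      unfolding S_pow_Suc'[OF v] QSv[OF v] ..
    hence "convergent (\<lambda>k. (S ^\<^sub>m Suc k *\<^sub>v v) $ i)" using c1[OF Sv i] by simp
    thus "convergent (\<lambda>k. (S ^\<^sub>m k *\<^sub>v v) $ i)" by (rule convergent_Suc_iff[THEN iffD1])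
  qed
qed

end

lemma psr_iff: assumes T: "T \<in> carrier_mat k k"
  shows "pseudo_spectral_radius T < 1 \<longleftrightarrow>
    (\<forall>l. eigenvalue (map_mat complex_of_real T) l \<and> l \<noteq> 1 \<longrightarrow> cmod l < 1)"
proof -
  let ?A = "{cmod l | l. eigenvalue (map_mat complex_of_real T) l \<and> l \<noteq> 1}"
  have Tc: "map_mat complex_of_real T \<in> carrier_mat k k" using T by simp
  have "?A \<subseteq> cmod ` spectrum (map_mat complex_of_real T)" unfolding spectrum_def by auto
  moreover have "finite (cmod ` spectrum (map_mat complex_of_real T))"
    using card_finite_spectrum(1)[OF Tc] by simp
  ultimately have fin: "finite (?A \<union> {0})" using finite_subset by auto
  have "pseudo_spectral_radius T < 1 \<longleftrightarrow> (\<forall>a \<in> ?A \<union> {0}. a < 1)"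
    unfolding pseudo_spectral_radius_def by (rule Max_less_iff[OF fin]) simp
  also have "\<dots> \<longleftrightarrow> (\<forall>l. eigenvalue (map_mat complex_of_real T) l \<and> l \<noteq> 1 \<longrightarrow> cmod l < 1)"
  proof
    assume h: "\<forall>a\<in>?A \<union> {0}. a < 1"
    show "\<forall>l. eigenvalue (map_mat complex_of_real T) l \<and> l \<noteq> 1 \<longrightarrow> cmod l < 1"
    proof (intro allI impI)
      fix l assume "eigenvalue (map_mat complex_of_real T) l \<and> l \<noteq> 1"
      hence "cmod l \<in> ?A \<union> {0}" by blast
      thus "cmod l < 1" using h by blast
    qed
  next
    assume h: "\<forall>l. eigenvalue (map_mat complex_of_real T) l \<and> l \<noteq> 1 \<longrightarrow> cmod l < 1"
    show "\<forall>a\<in>?A \<union> {0}. a < 1"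
    proof
      fix a assume "a \<in> ?A \<union> {0}"
      thus "a < 1"
      proof
        assume "a \<in> ?A"
        then obtain l where "a = cmod l" "eigenvalue (map_mat complex_of_real T) l \<and> l \<noteq> 1" by blast
        thus "a < 1" using h by simp
      next
        assume "a \<in> {0}" thus "a < 1" by simp
      qed
    qed
  qed
  finally show ?thesis .
qed

theorem theorem1:
  fixes n m :: nat and W P B :: "real mat" and b :: "real vec"
  assumes W: "pos_def_mat n W"
    and P: "pos_def_mat n P"
    and B: "B \<in> carrier_mat m n"
    and rank: "mat_rank B < m" and mn: "m \<le> n"
    and b_range: "\<exists>y \<in> carrier_vec (n + m).
       b = four_block_mat W (transpose_mat B) (- B) (0\<^sub>m m m) *\<^sub>v y"
  shows "iteration_convergent (n + m)
           (four_block_mat P (transpose_mat B) (- B) (0\<^sub>m m m))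
           (four_block_mat W (transpose_mat B) (- B) (0\<^sub>m m m)) b
         \<longleftrightarrow>
         pseudo_spectral_radius
           ((mat_inv n P - mat_inv n P * transpose_mat B
               * moore_penrose (B * mat_inv n P * transpose_mat B) * B * mat_inv n P)
            * (P - W)) < 1"
proof -
  interpret sp n m W P B by (rule sp.intro[OF W P B])
  have M_eq: "four_block_mat P (transpose_mat B) (- B) (0\<^sub>m m m) = Mm" unfolding Mm_def Bt_def ..
  have A_eq: "four_block_mat W (transpose_mat B) (- B) (0\<^sub>m m m) = Am" unfolding Am_def Bt_def ..
  have K_eq: "(mat_inv n P - mat_inv n P * transpose_mat B
               * moore_penrose (B * mat_inv n P * transpose_mat B) * B * mat_inv n P) * (P - W) = K"
    unfolding K_def X_def Et_def E_def Pv_def Bt_def ..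
  from b_range obtain ys where ys: "ys \<in> carrier_vec (n+m)" and b: "b = Am *\<^sub>v ys"
    unfolding A_eq by blast
  show ?thesis unfolding M_eq A_eq K_eq psr_iff[OF Kc]
  proof
    assume conv: "iteration_convergent (n+m) Mm Am b"
    show "\<forall>l. eigenvalue (map_mat complex_of_real K) l \<and> l \<noteq> 1 \<longrightarrow> cmod l < 1"
    proof (intro allI impI)
      fix l assume h: "eigenvalue (map_mat complex_of_real K) l \<and> l \<noteq> 1"
      show "cmod l < 1"
      proof (cases "l = 0")
        case False
        from ev_K_S[OF False] h have "eigenvalue (map_mat complex_of_real S) l" by simp
        from conv_nec[OF ys b conv this] h show ?thesis by simp
      qed simp
    qed
  next
    assume h: "\<forall>l. eigenvalue (map_mat complex_of_real K) l \<and> l \<noteq> 1 \<longrightarrow> cmod l < 1"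
    show "iteration_convergent (n+m) Mm Am b"
    proof (rule conv_suff[OF ys b])
      fix l assume ev: "eigenvalue (map_mat complex_of_real S) l"
      show "cmod l < 1"
      proof (cases "l = 0")
        case False
        from ev_S_K[OF False ev] have evK: "eigenvalue (map_mat complex_of_real K) l" .
        with K_no1c have "l \<noteq> 1" by auto
        with evK h show ?thesis by blast
      qed simp
    qed
  qed
qed

end
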